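(* Let $\Omega\subset\mathbb{C}$ be a simply connected domain, let $g:\Omega\to\mathbb{C}\setminus\{0\}$ be holomorphic, and let $\mathcal{A},\mathcal{B}:\Omega\to\mathbb{R}$ be $\mathcal{C}^2$ functions satisfying $$\mathcal{A}_{z\overline z}=\frac{-1+|g|^2}{1+|g|^2}\,\mathcal{B}_{z\overline z}\quad\text{and}\quad \mathcal{A}_z\neq\frac{-1+|g|^2}{1+|g|^2}\,\mathcal{B}_z\ \text{ at every point of }\Omega.$$ Then there exists a map $\mathbf{X}=(\mathbf{x}_1,\mathbf{x}_2,\mathbf{x}_3,\mathbf{x}_4):\Omega\to\mathbb{L}^4$ (unique up to an additive constant vector) with $$\mathbf{X}_z=\mathcal{A}_z\begin{bmatrix}\frac12\left(\frac1g-g\right)\\ \frac i2\left(\frac1g+g\right)\\ 1\\ 0\end{bmatrix}+\mathcal{B}_z\begin{bmatrix}\frac12\left(\frac1g+g\right)\\ \frac i2\left(\frac1g-g\right)\\ 0\\ 1\end{bmatrix},$$ which is a conformal spacelike immersion parameterizing a marginally trapped surface in $\mathbb{L}^4$, such that: up to additive constants $\mathbf{x}_3=\mathcal{A}$ and $\mathbf{x}_4=\mathcal{B}$; the vector $\mathcal{G}:=\big(2\,\mathrm{Re}\,g,\;2\,\mathrm{Im}\,g,\;-1+|g|^2,\;1+|g|^2\big)^T$ satisfies $\langle\mathbf{X}_z,\mathcal{G}\rangle=0$; and the induced metric is $$ds^2=\left(|g|+\frac{1}{|g|}\right)^2\left|\mathcal{A}_z-\frac{-1+|g|^2}{1+|g|^2}\,\mathcal{B}_z\right|^2|dz|^2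 .$$
   Context: $\Omega\subset\mathbb{R}^2\equiv\mathbb{C}$ has complex coordinate $z=u+iv$, and $\partial_z=\frac12(\partial_u-i\partial_v)$, $\partial_{\overline z}=\frac12(\partial_u+i\partial_v)$; subscripts denote partial derivatives. $\mathbb{L}^4$ is $\mathbb{R}^4$ with the Lorentzian metric $\langle x,y\rangle=x_1y_1+x_2y_2+x_3y_3-x_4y_4$; this form is extended complex-bilinearly to $\mathbb{C}^4$. A map $\mathbf{X}:\Omega\to\mathbb{L}^4$ is a conformal spacelike immersion with metric $\Lambda|dz|^2=\Lambda(du^2+dv^2)$, $\Lambda>0$, iff $\langle\mathbf{X}_z,\mathbf{X}_z\rangle=0$ and $\Lambda=2\langle\mathbf{X}_z,\overline{\mathbf{X}_z}\rangle>0$. Its mean curvature vector is $\mathbf{H}=\Delta_{ds^2}\mathbf{X}=\frac{4}{\Lambda}\mathbf{X}_{z\overline z}$. A spacelike surface is marginally trapped if $\langle\mathbf{H},\mathbf{H}\rangle=0$. *)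

theory Defs
  imports "HOL-Analysis.Analysis"
begin

definition pu :: "(complex \<Rightarrow> 'a::real_normed_vector) \<Rightarrow> complex \<Rightarrow> 'a" where
  "pu f z = vector_derivative (\<lambda>t::real. f (z + of_real t)) (at 0)"

definition pv :: "(complex \<Rightarrow> 'a::real_normed_vector) \<Rightarrow> complex \<Rightarrow> 'a" where
  "pv f z = vector_derivative (\<lambda>t::real. f (z + \<i> * of_real t)) (at 0)"

definition C1_on :: "complex set \<Rightarrow> (complex \<Rightarrow> 'a::real_normed_vector) \<Rightarrow> bool" where
  "C1_on S f \<longleftrightarrow>
     (\<forall>z\<in>S. (\<lambda>t::real. f (z + of_real t)) differentiable (at 0)
          \<and> (\<lambda>t::real. f (z + \<i> * of_real t)) differentiable (at 0))
     \<and> continuous_on S (pu f) \<and> continuous_on S (pv f)"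

definition C2_on :: "complex set \<Rightarrow> (complex \<Rightarrow> 'a::real_normed_vector) \<Rightarrow> bool" where
  "C2_on S f \<longleftrightarrow> C1_on S f \<and> C1_on S (pu f) \<and> C1_on S (pv f)"

definition wz :: "(complex \<Rightarrow> complex) \<Rightarrow> complex \<Rightarrow> complex" where
  "wz f z = (pu f z - \<i> * pv f z) / 2"

definition wzb :: "(complex \<Rightarrow> complex) \<Rightarrow> complex \<Rightarrow> complex" where
  "wzb f z = (pu f z + \<i> * pv f z) / 2"

definition cr :: "(complex \<Rightarrow> real) \<Rightarrow> complex \<Rightarrow> complex" where
  "cr f = (\<lambda>z. complex_of_real (f z))"

section \<open>Lorentz form on C^4 (complex-bilinear extension of the L^4 metric)\<close>

type_synonym c4 = "complex \<times> complex \<times> complex \<times> complex"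

fun lor :: "c4 \<Rightarrow> c4 \<Rightarrow> complex" where
  "lor (a1, a2, a3, a4) (b1, b2, b3, b4) = a1 * b1 + a2 * b2 + a3 * b3 - a4 * b4"

fun cnj4 :: "c4 \<Rightarrow> c4" where
  "cnj4 (a1, a2, a3, a4) = (cnj a1, cnj a2, cnj a3, cnj a4)"

fun scale4 :: "complex \<Rightarrow> c4 \<Rightarrow> c4" where
  "scale4 c (a1, a2, a3, a4) = (c * a1, c * a2, c * a3, c * a4)"

definition Xz :: "(complex \<Rightarrow> real) \<Rightarrow> (complex \<Rightarrow> real) \<Rightarrow> (complex \<Rightarrow> real) \<Rightarrow> (complex \<Rightarrow> real)
   \<Rightarrow> complex \<Rightarrow> c4" where
  "Xz x1 x2 x3 x4 z = (wz (cr x1) z, wz (cr x2) z, wz (cr x3) z, wz (cr x4) z)"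

definition Xzzb :: "(complex \<Rightarrow> real) \<Rightarrow> (complex \<Rightarrow> real) \<Rightarrow> (complex \<Rightarrow> real) \<Rightarrow> (complex \<Rightarrow> real)
   \<Rightarrow> complex \<Rightarrow> c4" where
  "Xzzb x1 x2 x3 x4 z = (wz (wzb (cr x1)) z, wz (wzb (cr x2)) z,
                         wz (wzb (cr x3)) z, wz (wzb (cr x4)) z)"

definition Lam :: "(complex \<Rightarrow> real) \<Rightarrow> (complex \<Rightarrow> real) \<Rightarrow> (complex \<Rightarrow> real) \<Rightarrow> (complex \<Rightarrow> real)
   \<Rightarrow> complex \<Rightarrow> complex" where
  "Lam x1 x2 x3 x4 z = 2 * lor (Xz x1 x2 x3 x4 z) (cnj4 (Xz x1 x2 x3 x4 z))"

definition conformal_spacelike_immersion ::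
  "complex set \<Rightarrow> (complex \<Rightarrow> real) \<Rightarrow> (complex \<Rightarrow> real) \<Rightarrow> (complex \<Rightarrow> real) \<Rightarrow> (complex \<Rightarrow> real) \<Rightarrow> bool" where
  "conformal_spacelike_immersion S x1 x2 x3 x4 \<longleftrightarrow>
     (\<forall>z\<in>S. lor (Xz x1 x2 x3 x4 z) (Xz x1 x2 x3 x4 z) = 0
            \<and> Im (Lam x1 x2 x3 x4 z) = 0 \<and> Re (Lam x1 x2 x3 x4 z) > 0)"

definition Hvec :: "(complex \<Rightarrow> real) \<Rightarrow> (complex \<Rightarrow> real) \<Rightarrow> (complex \<Rightarrow> real) \<Rightarrow> (complex \<Rightarrow> real)
   \<Rightarrow> complex \<Rightarrow> c4" where
  "Hvec x1 x2 x3 x4 z = scale4 (4 / Lam x1 x2 x3 x4 z) (Xzzb x1 x2 x3 x4 z)"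

definition marginally_trapped ::
  "complex set \<Rightarrow> (complex \<Rightarrow> real) \<Rightarrow> (complex \<Rightarrow> real) \<Rightarrow> (complex \<Rightarrow> real) \<Rightarrow> (complex \<Rightarrow> real) \<Rightarrow> bool" where
  "marginally_trapped S x1 x2 x3 x4 \<longleftrightarrow>
     (\<forall>z\<in>S. lor (Hvec x1 x2 x3 x4 z) (Hvec x1 x2 x3 x4 z) = 0)"

definition kappa :: "(complex \<Rightarrow> complex) \<Rightarrow> complex \<Rightarrow> real" where
  "kappa g z = (-1 + (cmod (g z))^2) / (1 + (cmod (g z))^2)"

definition Xz_rhs :: "(complex \<Rightarrow> complex) \<Rightarrow> (complex \<Rightarrow> real) \<Rightarrow> (complex \<Rightarrow> real) \<Rightarrow> complex \<Rightarrow> c4" where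
  "Xz_rhs g A B z =
    (let a = wz (cr A) z; b = wz (cr B) z; w = g z in
     (a * ((1/2) * (1/w - w)) + b * ((1/2) * (1/w + w)),
      a * ((\<i>/2) * (1/w + w)) + b * ((\<i>/2) * (1/w - w)),
      a,
      b))"

definition Gvec :: "(complex \<Rightarrow> complex) \<Rightarrow> complex \<Rightarrow> c4" where
  "Gvec g z = (of_real (2 * Re (g z)), of_real (2 * Im (g z)),
               of_real (-1 + (cmod (g z))^2), of_real (1 + (cmod (g z))^2))"

end

theory Submission
  imports Defs "HOL-Complex_Analysis.Complex_Analysis"
begin

lemma line_has_derivative:
  fixes f :: "complex \<Rightarrow> 'a::real_normed_vector"
  assumes "(f has_derivative D) (at (z + of_real t * e))"
  shows "((\<lambda>s::real. f (z + of_real s * e)) has_derivative (\<lambda>s. s *\<^sub>R D e)) (at t within X)"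
proof -
  have l: "linear D" using assms has_derivative_linear by blast
  have "((\<lambda>s::real. z + of_real s * e) has_derivative (\<lambda>s. of_real s * e)) (at t within X)"
    by (auto intro!: derivative_eq_intros)
  from has_derivative_in_compose[OF this has_derivative_subset[OF assms]]
  have "((\<lambda>s::real. f (z + of_real s * e)) has_derivative (\<lambda>s. D (of_real s * e))) (at t within X)"
    by (simp add: o_def)
  moreover have "D (of_real s * e) = s *\<^sub>R D e" for s
    using linear_scale[OF l, of s e] by (simp add: scaleR_conv_of_real)
  ultimately show ?thesis by simp
qed

lemma line_vd:
  fixes f :: "complex \<Rightarrow> 'a::real_normed_vector"
  assumes "(f has_derivative D) (at (z + of_real t * e))"
  shows "((\<lambda>s::real. f (z + of_real s * e)) has_vector_derivative D e) (at t within X)"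
  using line_has_derivative[OF assms] by (simp add: has_vector_derivative_def)

lemma pu_from_deriv:
  fixes f :: "complex \<Rightarrow> 'a::real_normed_vector"
  assumes "(f has_derivative D) (at z)"
  shows "pu f z = D 1" "(\<lambda>t::real. f (z + of_real t)) differentiable (at 0)"
proof -
  have "((\<lambda>s::real. f (z + of_real s * 1)) has_vector_derivative D 1) (at 0)"
    by (rule line_vd) (use assms in simp)
  then show "pu f z = D 1" "(\<lambda>t::real. f (z + of_real t)) differentiable (at 0)"
    by (auto simp: pu_def vector_derivative_at differentiable_def has_vector_derivative_def)
qed

lemma pv_from_deriv:
  fixes f :: "complex \<Rightarrow> 'a::real_normed_vector"
  assumes "(f has_derivative D) (at z)"
  shows "pv f z = D \<i>" "(\<lambda>t::real. f (z + \<i> * of_real t)) differentiable (at 0)"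
proof -
  have "((\<lambda>s::real. f (z + of_real s * \<i>)) has_vector_derivative D \<i>) (at 0)"
    by (rule line_vd) (use assms in simp)
  then show "pv f z = D \<i>" "(\<lambda>t::real. f (z + \<i> * of_real t)) differentiable (at 0)"
    by (auto simp: pv_def vector_derivative_at differentiable_def has_vector_derivative_def mult.commute)
qed

lemma pu_cong:
  fixes f g :: "complex \<Rightarrow> 'a::real_normed_vector"
  assumes "open S" "z \<in> S" "\<And>w. w \<in> S \<Longrightarrow> f w = g w"
  shows "pu f z = pu g z" "pv f z = pv g z"
proof -
  have ev: "eventually (\<lambda>t::real. z + of_real t * e \<in> S) (nhds 0)" for e
  proof -
    have "open ((\<lambda>t::real. z + of_real t * e) -` S)"
      by (rule open_vimage[OF assms(1)]) (intro continuous_intros)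
    moreover have "0 \<in> (\<lambda>t::real. z + of_real t * e) -` S" using assms(2) by simp
    ultimately show ?thesis unfolding eventually_nhds by blast
  qed
  show "pu f z = pu g z"
    unfolding pu_def
    by (rule vector_derivative_cong_eq) (use ev[of 1] assms(3) in \<open>auto elim: eventually_mono\<close>)
  show "pv f z = pv g z"
    unfolding pv_def
    by (rule vector_derivative_cong_eq) (use ev[of "\<i>"] assms(3) in \<open>auto elim: eventually_mono simp: mult.commute\<close>)
qed

lemma C1_on_deriv:
  fixes f :: "complex \<Rightarrow> 'a::real_normed_vector"
  assumes S: "open S" and C1: "C1_on S f" and z: "z \<in> S"
  shows "(f has_derivative (\<lambda>h. Re h *\<^sub>R pu f z + Im h *\<^sub>R pv f z)) (at z)"
proof -
  obtain r where r: "r > 0" "ball z r \<subseteq> S" using S z openE by blast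
  define X where "X = ball (Re z) (r/2)"
  define Y where "Y = ball (Im z) (r/2)"
  have inS: "Complex x y \<in> S" if "x \<in> X" "y \<in> Y" for x y
  proof -
    have "cmod (z - Complex x y) \<le> \<bar>Re z - x\<bar> + \<bar>Im z - y\<bar>"
      using cmod_le[of "z - Complex x y"] by simp
    also have "\<dots> < r" using that by (auto simp: X_def Y_def dist_real_def)
    finally have "Complex x y \<in> ball z r" by (simp add: dist_norm)
    then show ?thesis using r(2) by blast
  qed
  have dl: "(\<lambda>t::real. f (w + of_real t)) differentiable (at 0)"
       "(\<lambda>t::real. f (w + \<i> * of_real t)) differentiable (at 0)"
       and cpu: "continuous_on S (pu f)" and cpv: "continuous_on S (pv f)"
    if "w \<in> S" for w using C1 that unfolding C1_on_def by auto
  have fx: "((\<lambda>x. f (Complex x (Im z))) has_derivative (\<lambda>t. t *\<^sub>R pu f z)) (at (Re z) within X)"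
  proof -
    have "((\<lambda>t::real. f (z + of_real t)) has_vector_derivative pu f z) (at 0)"
      using dl(1)[OF z] unfolding pu_def by (simp add: vector_derivative_works)
    then have d0: "((\<lambda>t::real. f (z + of_real t)) has_derivative (\<lambda>t. t *\<^sub>R pu f z)) (at ((\<lambda>x. x - Re z) (Re z)))"
      by (simp add: has_vector_derivative_def)
    have dd: "((\<lambda>x::real. x - Re z) has_derivative (\<lambda>t. t)) (at (Re z) within X)"
      by (auto intro!: derivative_eq_intros)
    from has_derivative_compose[OF dd d0]
    have "((\<lambda>x. f (z + of_real (x - Re z))) has_derivative (\<lambda>t. t *\<^sub>R pu f z)) (at (Re z) within X)"
      by (simp add: o_def)
    moreover have "z + of_real (x - Re z) = Complex x (Im z)" for x by (simp add: complex_eq_iff)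
    ultimately show ?thesis by simp
  qed
  have fy: "((\<lambda>y. f (Complex x y)) has_derivative blinfun_apply (blinfun_scaleR_left (pv f (Complex x y)))) (at y within Y)"
    if "x \<in> X" "y \<in> Y" for x y
  proof -
    let ?w = "Complex x y"
    have "((\<lambda>t::real. f (?w + \<i> * of_real t)) has_vector_derivative pv f ?w) (at 0)"
      using dl(2)[OF inS[OF that]] unfolding pv_def by (simp add: vector_derivative_works)
    then have d0: "((\<lambda>t::real. f (?w + \<i> * of_real t)) has_derivative (\<lambda>t. t *\<^sub>R pv f ?w)) (at ((\<lambda>s. s - y) y))"
      by (simp add: has_vector_derivative_def)
    have dd: "((\<lambda>s::real. s - y) has_derivative (\<lambda>t. t)) (at y within Y)"
      by (auto intro!: derivative_eq_intros)
    from has_derivative_compose[OF dd d0]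
    have "((\<lambda>s. f (?w + \<i> * of_real (s - y))) has_derivative (\<lambda>t. t *\<^sub>R pv f ?w)) (at y within Y)"
      by (simp add: o_def)
    moreover have "?w + \<i> * of_real (s - y) = Complex x s" for s by (simp add: complex_eq_iff)
    ultimately show ?thesis by simp
  qed
  have cont: "continuous (at (Re z, Im z) within X \<times> Y) (\<lambda>(x, y). blinfun_scaleR_left (pv f (Complex x y)))"
  proof -
    have "continuous_on (X \<times> Y) (\<lambda>(x, y). blinfun_scaleR_left (pv f (Complex x y)))"
    proof -
      have c1: "continuous_on (X \<times> Y) (\<lambda>p. Complex (fst p) (snd p))"
        by (simp add: Complex_eq continuous_intros)
      have "(\<lambda>p. Complex (fst p) (snd p)) ` (X \<times> Y) \<subseteq> S" using inS by auto
      then have "continuous_on (X \<times> Y) (\<lambda>p. pv f (Complex (fst p) (snd p)))"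
        using continuous_on_compose2[OF cpv c1] z by blast
      then have "continuous_on (X \<times> Y) (\<lambda>p. blinfun_scaleR_left (pv f (Complex (fst p) (snd p))))"
        by (intro continuous_intros)
      then show ?thesis by (simp add: case_prod_unfold)
    qed
    moreover have "(Re z, Im z) \<in> X \<times> Y" using r by (auto simp: X_def Y_def)
    moreover have "open (X \<times> Y)" by (simp add: X_def Y_def open_Times)
    ultimately show ?thesis using continuous_on_eq_continuous_within by blast
  qed
  have "((\<lambda>(x, y). f (Complex x y)) has_derivative (\<lambda>(tx, ty). tx *\<^sub>R pu f z + blinfun_scaleR_left (pv f (Complex (Re z) (Im z))) ty)) (at (Re z, Im z) within X \<times> Y)"
  proof (rule has_derivative_partialsI[OF fx fy cont])
    show "Im z \<in> Y" using r by (simp add: Y_def)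
    show "convex Y" by (simp add: Y_def)
  qed
  moreover have "open (X \<times> Y)" by (simp add: X_def Y_def open_Times)
  moreover have "(Re z, Im z) \<in> X \<times> Y" using r by (auto simp: X_def Y_def)
  ultimately have d1: "((\<lambda>(x, y). f (Complex x y)) has_derivative (\<lambda>(tx, ty). tx *\<^sub>R pu f z + blinfun_scaleR_left (pv f (Complex (Re z) (Im z))) ty)) (at (Re z, Im z))"
    using at_within_open by metis
  have d2: "((\<lambda>(x, y). f (Complex x y)) has_derivative (\<lambda>(tx, ty). tx *\<^sub>R pu f z + ty *\<^sub>R pv f z)) (at (Re z, Im z))"
    using d1 by simp
  have dRI: "((\<lambda>w. (Re w, Im w)) has_derivative (\<lambda>h. (Re h, Im h))) (at z)"
    by (auto intro!: derivative_eq_intros)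
  from has_derivative_compose[OF dRI d2]
  have "((\<lambda>w. f (Complex (Re w) (Im w))) has_derivative (\<lambda>h. Re h *\<^sub>R pu f z + Im h *\<^sub>R pv f z)) (at z)"
    by (simp only: case_prod_conv)
  then show ?thesis by (simp only: complex.collapse)
qed

lemma deriv_C1_on:
  fixes f :: "complex \<Rightarrow> 'a::real_normed_vector"
  assumes "open S" "\<And>z. z \<in> S \<Longrightarrow> (f has_derivative D z) (at z)"
    "continuous_on S (\<lambda>z. D z 1)" "continuous_on S (\<lambda>z. D z \<i>)"
  shows "C1_on S f" "\<And>z. z \<in> S \<Longrightarrow> pu f z = D z 1" "\<And>z. z \<in> S \<Longrightarrow> pv f z = D z \<i>"
proof -
  show pu: "\<And>z. z \<in> S \<Longrightarrow> pu f z = D z 1" and pv: "\<And>z. z \<in> S \<Longrightarrow> pv f z = D z \<i>"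
    using pu_from_deriv(1) pv_from_deriv(1) assms(2) by blast+
  have "continuous_on S (pu f)" by (rule continuous_on_eq[OF assms(3)]) (simp add: pu)
  moreover have "continuous_on S (pv f)" by (rule continuous_on_eq[OF assms(4)]) (simp add: pv)
  moreover have "\<forall>z\<in>S. (\<lambda>t::real. f (z + of_real t)) differentiable (at 0)
          \<and> (\<lambda>t::real. f (z + \<i> * of_real t)) differentiable (at 0)"
    using pu_from_deriv(2) pv_from_deriv(2) assms(2) by blast
  ultimately show "C1_on S f" unfolding C1_on_def by blast
qed

lemma C1_on_cong:
  fixes f g :: "complex \<Rightarrow> 'a::real_normed_vector"
  assumes "open S" "\<And>w. w \<in> S \<Longrightarrow> f w = g w" "C1_on S f"
  shows "C1_on S g"
proof -
  have d: "(g has_derivative (\<lambda>h. Re h *\<^sub>R pu f z + Im h *\<^sub>R pv f z)) (at z)" if "z \<in> S" for z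
    using has_derivative_transform_within_open[OF C1_on_deriv[OF assms(1,3) that] assms(1) that assms(2)] .
  have "continuous_on S (pu f)" "continuous_on S (pv f)" using assms(3) by (auto simp: C1_on_def)
  then show ?thesis by (intro deriv_C1_on[OF assms(1) d]) auto
qed

lemma linear_C_expand:
  fixes L :: "complex \<Rightarrow> 'a::real_normed_vector"
  assumes "linear L"
  shows "L h = Re h *\<^sub>R L 1 + Im h *\<^sub>R L \<i>"
proof -
  have "h = Re h *\<^sub>R 1 + Im h *\<^sub>R \<i>" by (simp add: complex_eq_iff)
  then have "L h = L (Re h *\<^sub>R 1 + Im h *\<^sub>R \<i>)" by simp
  also have "\<dots> = Re h *\<^sub>R L 1 + Im h *\<^sub>R L \<i>"
    using assms by (simp only: linear_add linear_scale)
  finally show ?thesis .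
qed

lemma sym_id:
  assumes "Re Gv = - Im Gu"
  shows "Re ((of_real (Re e) * Gu + of_real (Im e) * Gv) * d) = Re ((of_real (Re d) * Gu + of_real (Im d) * Gv) * e)"
  using assms by (simp add: algebra_simps)

lemma G_line_deriv:
  fixes G :: "complex \<Rightarrow> complex"
  assumes "(G has_derivative (\<lambda>h. of_real (Re h) * a + of_real (Im h) * b)) (at q)"
    and "q = z + of_real t * e"
  shows "((\<lambda>s::real. G (z + of_real s * e)) has_derivative (\<lambda>s. of_real s * (of_real (Re e) * a + of_real (Im e) * b))) (at t within X)"
  using line_has_derivative[of G _ z t e X] assms by (simp add: scaleR_conv_of_real)

lemma Re_ofr_mult: "Re (of_real r * z) = r * Re z" by simp

lemma poincare_partial:
  fixes G Gu Gv :: "complex \<Rightarrow> complex"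
  assumes D: "open D" "convex D" "c \<in> D"
    and dG: "\<And>w. w \<in> D \<Longrightarrow> (G has_derivative (\<lambda>h. of_real (Re h) * Gu w + of_real (Im h) * Gv w)) (at w)"
    and cG: "continuous_on D G" "continuous_on D Gu" "continuous_on D Gv"
    and cl: "\<And>w. w \<in> D \<Longrightarrow> Re (Gv w) = - Im (Gu w)"
    and w: "w \<in> D"
  shows "((\<lambda>s::real. integral {0..1} (\<lambda>t::real. Re (G (c + of_real t * (w + of_real s * e - c)) * (w + of_real s * e - c))))
            has_vector_derivative Re (G w * e)) (at 0)"
proof -
  obtain r where r: "r > 0" "ball w r \<subseteq> D" using D(1) w openE by blast
  define \<delta> where "\<delta> = r / (cmod e + 1)"
  have ep: "cmod e + 1 > 0" using norm_ge_zero[of e] by linarith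
  have \<delta>: "\<delta> > 0" using r ep by (simp add: \<delta>_def)
  define V where "V = ball (0::real) \<delta>"
  have wsD: "w + of_real s * e \<in> D" if "s \<in> V" for s
  proof -
    have "cmod (of_real s * e) = \<bar>s\<bar> * cmod e" by (simp add: norm_mult)
    also have "\<dots> \<le> \<bar>s\<bar> * (cmod e + 1)" by (simp add: mult_left_mono)
    also have "\<dots> < \<delta> * (cmod e + 1)"
      using that ep by (intro mult_strict_right_mono) (auto simp: V_def)
    also have "\<dots> = r" using ep by (simp add: \<delta>_def)
    finally have "w + of_real s * e \<in> ball w r" by (simp add: dist_norm)
    then show ?thesis using r by blast
  qed
  define q where "q = (\<lambda>s t::real. c + of_real t * (w - c) + of_real s * (of_real t * e))"
  have q_eq: "q s t = c + of_real t * (w + of_real s * e - c)" for s t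
    by (simp add: q_def algebra_simps)
  have qD: "q s t \<in> D" if "s \<in> V" "t \<in> {0..1}" for s t
  proof -
    have "(1 - t) *\<^sub>R c + t *\<^sub>R (w + of_real s * e) \<in> D"
      using convexD[OF D(2) D(3) wsD[OF that(1)], of "1 - t" t] that(2) by auto
    moreover have "(1 - t) *\<^sub>R c + t *\<^sub>R (w + of_real s * e) = q s t"
      by (simp add: q_eq scaleR_conv_of_real algebra_simps)
    ultimately show ?thesis by simp
  qed
  define f where "f = (\<lambda>s t. Re (G (q s t) * (w - c + of_real s * e)))"
  define fx where "fx = (\<lambda>s t. Re (G (q s t) * e + of_real t * (of_real (Re e) * Gu (q s t) + of_real (Im e) * Gv (q s t)) * (w - c + of_real s * e)))"
  have fxd: "((\<lambda>s. f s t) has_vector_derivative fx s t) (at s within V)" if "s \<in> V" "t \<in> cbox 0 1" for s t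
  proof -
    have tt: "t \<in> {0..1}" using that(2) by simp
    have d1: "((\<lambda>s::real. G (c + of_real t * (w - c) + of_real s * (of_real t * e))) has_derivative
       (\<lambda>\<sigma>. of_real \<sigma> * (of_real (Re (of_real t * e)) * Gu (q s t) + of_real (Im (of_real t * e)) * Gv (q s t)))) (at s within V)"
      by (rule G_line_deriv[OF dG[OF qD[OF that(1) tt]]]) (simp add: q_def)
    have d2: "((\<lambda>s::real. w - c + of_real s * e) has_derivative (\<lambda>\<sigma>. of_real \<sigma> * e)) (at s within V)"
      by (auto intro!: derivative_eq_intros)
    have d3: "((\<lambda>s::real. G (c + of_real t * (w - c) + of_real s * (of_real t * e)) * (w - c + of_real s * e)) has_derivative
       (\<lambda>\<sigma>. G (q s t) * (of_real \<sigma> * e) + of_real \<sigma> * (of_real (Re (of_real t * e)) * Gu (q s t) + of_real (Im (of_real t * e)) * Gv (q s t)) * (w - c + of_real s * e))) (at s within V)"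
      using has_derivative_mult[OF d1 d2] by (simp add: q_def)
    have d4: "((\<lambda>s::real. Re (G (c + of_real t * (w - c) + of_real s * (of_real t * e)) * (w - c + of_real s * e))) has_derivative
       (\<lambda>\<sigma>. Re (G (q s t) * (of_real \<sigma> * e) + of_real \<sigma> * (of_real (Re (of_real t * e)) * Gu (q s t) + of_real (Im (of_real t * e)) * Gv (q s t)) * (w - c + of_real s * e)))) (at s within V)"
      using bounded_linear.has_derivative[OF bounded_linear_Re d3] .
    have "(\<lambda>\<sigma>::real. Re (G (q s t) * (of_real \<sigma> * e) + of_real \<sigma> * (of_real (Re (of_real t * e)) * Gu (q s t) + of_real (Im (of_real t * e)) * Gv (q s t)) * (w - c + of_real s * e)))
        = (\<lambda>\<sigma>. \<sigma> *\<^sub>R fx s t)"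
      by (rule ext) (simp add: fx_def algebra_simps)
    with d4 show ?thesis by (simp add: has_vector_derivative_def f_def q_def)
  qed
  have contq: "continuous_on (V \<times> {0..1}) (\<lambda>x. q (fst x) (snd x))"
    by (simp add: q_def continuous_intros)
  have qim: "(\<lambda>x. q (fst x) (snd x)) ` (V \<times> {0..1}) \<subseteq> D" using qD by auto
  have cfx: "continuous_on (V \<times> cbox 0 1) (\<lambda>(s, t). fx s t)"
  proof -
    have [simp]: "cbox (0::real) 1 = {0..1}" by simp
    have c1: "continuous_on (V \<times> {0..1}) (\<lambda>x. G (q (fst x) (snd x)))"
      using continuous_on_compose2[OF cG(1) contq qim] .
    have c2: "continuous_on (V \<times> {0..1}) (\<lambda>x. Gu (q (fst x) (snd x)))"
      using continuous_on_compose2[OF cG(2) contq qim] .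
    have c3: "continuous_on (V \<times> {0..1}) (\<lambda>x. Gv (q (fst x) (snd x)))"
      using continuous_on_compose2[OF cG(3) contq qim] .
    have "continuous_on (V \<times> {0..1}) (\<lambda>x. fx (fst x) (snd x))"
      unfolding fx_def by (intro continuous_intros c1 c2 c3)
    then show ?thesis by (simp add: case_prod_unfold)
  qed
  have intf: "f s integrable_on cbox 0 1" if "s \<in> V" for s
  proof -
    have "continuous_on {0..1} (\<lambda>t. q s t)" by (simp add: q_def continuous_intros)
    moreover have "(\<lambda>t. q s t) ` {0..1} \<subseteq> D" using qD that by auto
    ultimately have "continuous_on {0..1} (\<lambda>t. G (q s t))" using continuous_on_compose2[OF cG(1)] by blast
    then have "continuous_on {0..1} (f s)" unfolding f_def by (intro continuous_intros)
    then show ?thesis by (simp add: integrable_continuous_real)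
  qed
  have L: "((\<lambda>s. integral (cbox 0 1) (f s)) has_vector_derivative integral (cbox 0 1) (fx 0)) (at 0 within V)"
    by (rule leibniz_rule_vector_derivative[OF fxd intf cfx]) (use \<delta> in \<open>auto simp: V_def\<close>)
  have L': "((\<lambda>s. integral {0..1} (f s)) has_vector_derivative integral {0..1} (fx 0)) (at 0)"
  proof -
    have "open V" "0 \<in> V" using \<delta> by (auto simp: V_def)
    then show ?thesis using L at_within_open by (metis cbox_interval)
  qed
  define \<phi> where "\<phi> = (\<lambda>t::real. t * Re (G (c + of_real t * (w - c)) * e))"
  have \<phi>d: "(\<phi> has_vector_derivative fx 0 t) (at t within {0..1})" if "t \<in> {0..1}" for t
  proof -
    have qt: "c + of_real t * (w - c) = q 0 t" by (simp add: q_def)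
    have qD0: "q 0 t \<in> D" using qD[of 0 t] that \<delta> by (simp add: V_def)
    have d1: "((\<lambda>s::real. G (c + of_real s * (w - c))) has_derivative
       (\<lambda>\<sigma>. of_real \<sigma> * (of_real (Re (w - c)) * Gu (q 0 t) + of_real (Im (w - c)) * Gv (q 0 t)))) (at t within {0..1})"
      by (rule G_line_deriv[OF dG[OF qD0]]) (simp add: q_def)
    have d2: "((\<lambda>s::real. Re (G (c + of_real s * (w - c)) * e)) has_derivative
       (\<lambda>\<sigma>. Re (of_real \<sigma> * (of_real (Re (w - c)) * Gu (q 0 t) + of_real (Im (w - c)) * Gv (q 0 t)) * e))) (at t within {0..1})"
      using bounded_linear.has_derivative[OF bounded_linear_Re bounded_linear.has_derivative[OF bounded_linear_mult_left[of e] d1]] by simp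
    have d3: "(\<phi> has_derivative (\<lambda>\<sigma>. t * Re (of_real \<sigma> * (of_real (Re (w - c)) * Gu (q 0 t) + of_real (Im (w - c)) * Gv (q 0 t)) * e)
          + \<sigma> * Re (G (c + of_real t * (w - c)) * e))) (at t within {0..1})"
      unfolding \<phi>_def using has_derivative_mult[OF has_derivative_ident d2] by simp
    have sy: "Re ((of_real (Re e) * Gu (q 0 t) + of_real (Im e) * Gv (q 0 t)) * (w - c))
            = Re ((of_real (Re (w - c)) * Gu (q 0 t) + of_real (Im (w - c)) * Gv (q 0 t)) * e)"
      by (rule sym_id[OF cl[OF qD0]])
    have "(\<lambda>\<sigma>::real. t * Re (of_real \<sigma> * (of_real (Re (w - c)) * Gu (q 0 t) + of_real (Im (w - c)) * Gv (q 0 t)) * e)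
          + \<sigma> * Re (G (c + of_real t * (w - c)) * e)) = (\<lambda>\<sigma>. \<sigma> *\<^sub>R fx 0 t)"
    proof (rule ext)
      fix \<sigma> :: real
      have e1: "Re (of_real \<sigma> * (of_real (Re (w - c)) * Gu (q 0 t) + of_real (Im (w - c)) * Gv (q 0 t)) * e)
         = \<sigma> * Re ((of_real (Re (w - c)) * Gu (q 0 t) + of_real (Im (w - c)) * Gv (q 0 t)) * e)"
        by (simp only: mult.assoc Re_ofr_mult)
      have e2: "fx 0 t = Re (G (q 0 t) * e) + t * Re ((of_real (Re e) * Gu (q 0 t) + of_real (Im e) * Gv (q 0 t)) * (w - c))"
        unfolding fx_def by (simp only: mult.assoc Re_ofr_mult plus_complex.sel mult_zero_left of_real_0 add_0_right)
      have alg: "\<And>X Z::real. t * (\<sigma> * Z) + \<sigma> * X = \<sigma> *\<^sub>R (X + t * Z)" by (simp add: algebra_simps)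
      show "t * Re (of_real \<sigma> * (of_real (Re (w - c)) * Gu (q 0 t) + of_real (Im (w - c)) * Gv (q 0 t)) * e)
          + \<sigma> * Re (G (c + of_real t * (w - c)) * e) = \<sigma> *\<^sub>R fx 0 t"
        unfolding e1 e2 qt sy[symmetric] by (rule alg)
    qed
    with d3 show ?thesis by (simp add: has_vector_derivative_def)
  qed
  have "(fx 0 has_integral (\<phi> 1 - \<phi> 0)) {0..1}"
    by (rule fundamental_theorem_of_calculus) (use \<phi>d in auto)
  then have "integral {0..1} (fx 0) = Re (G w * e)"
    by (simp add: \<phi>_def integral_unique)
  moreover have "(\<lambda>s. integral {0..1} (f s)) = (\<lambda>s::real. integral {0..1} (\<lambda>t::real. Re (G (c + of_real t * (w + of_real s * e - c)) * (w + of_real s * e - c))))"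
    by (rule ext, rule integral_cong) (simp add: f_def q_eq algebra_simps)
  ultimately show ?thesis using L' by simp
qed

lemma poincare_convex:
  fixes G Gu Gv :: "complex \<Rightarrow> complex"
  assumes D: "open D" "convex D"
    and dG: "\<And>w. w \<in> D \<Longrightarrow> (G has_derivative (\<lambda>h. of_real (Re h) * Gu w + of_real (Im h) * Gv w)) (at w)"
    and cG: "continuous_on D G" "continuous_on D Gu" "continuous_on D Gv"
    and cl: "\<And>w. w \<in> D \<Longrightarrow> Re (Gv w) = - Im (Gu w)"
  shows "\<exists>U. \<forall>w\<in>D. (U has_derivative (\<lambda>h. Re (G w * h))) (at w)"
proof (cases "D = {}")
  case True then show ?thesis by simp
next
  case False
  then obtain c where c: "c \<in> D" by blast
  define U where "U = (\<lambda>w. integral {0..1} (\<lambda>t::real. Re (G (c + of_real t * (w - c)) * (w - c))))"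
  have pd: "((\<lambda>s::real. U (w + of_real s * e)) has_vector_derivative Re (G w * e)) (at 0)" if "w \<in> D" for w e
    unfolding U_def by (rule poincare_partial[OF D c dG cG cl that])
  have pu1: "((\<lambda>s::real. U (w + of_real s)) has_vector_derivative Re (G w)) (at 0)" if "w \<in> D" for w
    using pd[OF that, of 1] by simp
  have pv1: "((\<lambda>s::real. U (w + \<i> * of_real s)) has_vector_derivative Re (G w * \<i>)) (at 0)" if "w \<in> D" for w
    using pd[OF that, of "\<i>"] by (simp add: mult.commute)
  have puU: "pu U w = Re (G w)" if "w \<in> D" for w
    unfolding pu_def using pu1[OF that] by (rule vector_derivative_at)
  have pvU: "pv U w = Re (G w * \<i>)" if "w \<in> D" for w
    unfolding pv_def using pv1[OF that] by (rule vector_derivative_at)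
  have C1: "C1_on D U"
    unfolding C1_on_def
  proof (intro conjI ballI)
    fix w assume "w \<in> D"
    show "(\<lambda>t::real. U (w + of_real t)) differentiable (at 0)"
      using pu1[OF \<open>w \<in> D\<close>] by (auto simp: differentiable_def has_vector_derivative_def)
    show "(\<lambda>t::real. U (w + \<i> * of_real t)) differentiable (at 0)"
      using pv1[OF \<open>w \<in> D\<close>] by (auto simp: differentiable_def has_vector_derivative_def)
  next
    have "continuous_on D (\<lambda>w. Re (G w))" by (intro continuous_intros cG)
    then show "continuous_on D (pu U)" by (rule continuous_on_eq) (simp add: puU)
    have "continuous_on D (\<lambda>w. Re (G w * \<i>))" by (intro continuous_intros cG)
    then show "continuous_on D (pv U)" by (rule continuous_on_eq) (simp add: pvU)
  qed
  show ?thesis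
  proof (intro exI ballI)
    fix w assume w: "w \<in> D"
    have "(U has_derivative (\<lambda>h. Re h *\<^sub>R pu U w + Im h *\<^sub>R pv U w)) (at w)"
      by (rule C1_on_deriv[OF D(1) C1 w])
    moreover have "(\<lambda>h. Re h *\<^sub>R pu U w + Im h *\<^sub>R pv U w) = (\<lambda>h. Re (G w * h))"
      by (rule ext) (simp add: puU[OF w] pvU[OF w] algebra_simps)
    ultimately show "(U has_derivative (\<lambda>h. Re (G w * h))) (at w)" by simp
  qed
qed

lemma linear_C_expand':
  fixes L :: "complex \<Rightarrow> complex"
  assumes "linear L"
  shows "L = (\<lambda>h. of_real (Re h) * L 1 + of_real (Im h) * L \<i>)"
proof (rule ext)
  fix h
  have "L h = Re h *\<^sub>R L 1 + Im h *\<^sub>R L \<i>" by (rule linear_C_expand[OF assms])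
  then show "L h = of_real (Re h) * L 1 + of_real (Im h) * L \<i>" by (simp only: scaleR_conv_of_real)
qed

lemma closed_transport_alg:
  assumes "Re b = - Im a"
  shows "Re (F * (P2 * \<i>) + (of_real (Re (P * \<i>)) * a + of_real (Im (P * \<i>)) * b) * P)
       = - Im (F * (P2 * 1) + (of_real (Re (P * 1)) * a + of_real (Im (P * 1)) * b) * P)"
  using assms by (simp add: algebra_simps)

lemma inverse_deriv_one:
  assumes "open \<Omega>" "z \<in> \<Omega>" "\<Phi> holomorphic_on D" "open D" "\<Psi> holomorphic_on \<Omega>"
    "\<Psi> z \<in> D" "\<And>z. z \<in> \<Omega> \<Longrightarrow> \<Phi> (\<Psi> z) = z"
  shows "deriv \<Phi> (\<Psi> z) * deriv \<Psi> z = 1"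
proof -
  have a: "(\<Psi> has_field_derivative deriv \<Psi> z) (at z)"
      by (rule holomorphic_derivI[OF assms(5,1,2)])
  have b: "(\<Phi> has_field_derivative deriv \<Phi> (\<Psi> z)) (at (\<Psi> z))"
      by (rule holomorphic_derivI[OF assms(3,4,6)])
  have c: "((\<Phi> \<circ> \<Psi>) has_field_derivative deriv \<Phi> (\<Psi> z) * deriv \<Psi> z) (at z)"
    using DERIV_chain[OF b a] .
  have d: "((\<lambda>z. z) has_field_derivative deriv \<Phi> (\<Psi> z) * deriv \<Psi> z) (at z)"
    using has_field_derivative_transform_within_open[OF c assms(1,2)] assms(7) by simp
  show ?thesis using DERIV_unique[OF d DERIV_ident] .
qed

lemma exact_transport:
  fixes F Fu Fv :: "complex \<Rightarrow> complex"
  assumes \<Omega>: "open \<Omega>" and D: "open D" "convex D"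
    and hol: "\<Phi> holomorphic_on D" "\<Psi> holomorphic_on \<Omega>"
    and inv1: "\<And>z. z \<in> \<Omega> \<Longrightarrow> \<Psi> z \<in> D \<and> \<Phi> (\<Psi> z) = z"
    and inv2: "\<And>w. w \<in> D \<Longrightarrow> \<Phi> w \<in> \<Omega> \<and> \<Psi> (\<Phi> w) = w"
    and dF: "\<And>z. z \<in> \<Omega> \<Longrightarrow> (F has_derivative (\<lambda>h. of_real (Re h) * Fu z + of_real (Im h) * Fv z)) (at z)"
    and cF: "continuous_on \<Omega> F" "continuous_on \<Omega> Fu" "continuous_on \<Omega> Fv"
    and cl: "\<And>z. z \<in> \<Omega> \<Longrightarrow> Re (Fv z) = - Im (Fu z)"
  shows "\<exists>x. \<forall>z\<in>\<Omega>. (x has_derivative (\<lambda>h. Re (F z * h))) (at z)"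
proof -
  define P where "P = deriv \<Phi>"
  define P2 where "P2 = deriv (deriv \<Phi>)"
  have holP: "P holomorphic_on D" unfolding P_def by (rule holomorphic_deriv[OF hol(1) D(1)])
  have holP2: "P2 holomorphic_on D" unfolding P2_def by (rule holomorphic_deriv[OF holP[unfolded P_def] D(1)])
  have dPhi: "(\<Phi> has_field_derivative P w) (at w)" if "w \<in> D" for w
    unfolding P_def using holomorphic_derivI[OF hol(1) D(1) that] .
  have dP: "(P has_field_derivative P2 w) (at w)" if "w \<in> D" for w
    unfolding P2_def using holomorphic_derivI[OF holP[unfolded P_def] D(1) that] by (simp add: P_def)
  define DG where "DG = (\<lambda>w h. F (\<Phi> w) * (P2 w * h) + (of_real (Re (P w * h)) * Fu (\<Phi> w) + of_real (Im (P w * h)) * Fv (\<Phi> w)) * P w)"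
  define G where "G = (\<lambda>w. F (\<Phi> w) * P w)"
  have dG0: "(G has_derivative DG w) (at w)" if w: "w \<in> D" for w
  proof -
    have d1: "((\<lambda>w. F (\<Phi> w)) has_derivative (\<lambda>h. of_real (Re (P w * h)) * Fu (\<Phi> w) + of_real (Im (P w * h)) * Fv (\<Phi> w))) (at w)"
      using has_derivative_compose[OF dPhi[OF w, unfolded has_field_derivative_def] dF[OF conjunct1[OF inv2[OF w]]]] by (simp only:)
    have d2: "(P has_derivative (\<lambda>h. P2 w * h)) (at w)"
      using dP[OF w] by (simp add: has_field_derivative_def)
    show ?thesis unfolding G_def DG_def
      using has_derivative_mult[OF d1 d2] by (simp only:)
  qed
  define Gu where "Gu = (\<lambda>w. DG w 1)"
  define Gv where "Gv = (\<lambda>w. DG w \<i>)"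
  have dG: "(G has_derivative (\<lambda>h. of_real (Re h) * Gu w + of_real (Im h) * Gv w)) (at w)" if w: "w \<in> D" for w
  proof -
    have "linear (DG w)" using has_derivative_linear[OF dG0[OF w]] .
    then have "DG w = (\<lambda>h. of_real (Re h) * Gu w + of_real (Im h) * Gv w)"
      unfolding Gu_def Gv_def by (rule linear_C_expand')
    then show ?thesis using dG0[OF w] by simp
  qed
  have contPhi: "continuous_on D \<Phi>" using hol(1) holomorphic_on_imp_continuous_on by blast
  have imPhi: "\<Phi> ` D \<subseteq> \<Omega>" using inv2 by auto
  have cP: "continuous_on D P" "continuous_on D P2"
    using holP holP2 holomorphic_on_imp_continuous_on by blast+
  have cFP: "continuous_on D (\<lambda>w. F (\<Phi> w))" "continuous_on D (\<lambda>w. Fu (\<Phi> w))" "continuous_on D (\<lambda>w. Fv (\<Phi> w))"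
    using continuous_on_compose2[OF cF(1) contPhi imPhi] continuous_on_compose2[OF cF(2) contPhi imPhi]
      continuous_on_compose2[OF cF(3) contPhi imPhi] by auto
  have cG: "continuous_on D G" "continuous_on D Gu" "continuous_on D Gv"
  proof -
    have cR: "continuous_on D (\<lambda>w. of_real (Re (P w * c)) :: complex)" "continuous_on D (\<lambda>w. of_real (Im (P w * c)) :: complex)"
      "continuous_on D (\<lambda>w. P2 w * c)" for c
      by (intro continuous_on_of_real continuous_on_Re continuous_on_Im continuous_on_mult cP continuous_on_const)+
    show "continuous_on D G" unfolding G_def by (rule continuous_on_mult[OF cFP(1) cP(1)])
    show "continuous_on D Gu" unfolding Gu_def DG_def
      by (intro continuous_on_add continuous_on_mult cR cP cFP)
    show "continuous_on D Gv" unfolding Gv_def DG_def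
      by (intro continuous_on_add continuous_on_mult cR cP cFP)
  qed
  have clG: "Re (Gv w) = - Im (Gu w)" if "w \<in> D" for w
    unfolding Gu_def Gv_def DG_def
    by (rule closed_transport_alg[OF cl[OF conjunct1[OF inv2[OF that]]]])
  obtain U where U: "\<And>w. w \<in> D \<Longrightarrow> (U has_derivative (\<lambda>h. Re (G w * h))) (at w)"
    using poincare_convex[OF D dG cG clG] by metis
  have inv1a: "\<And>z. z \<in> \<Omega> \<Longrightarrow> \<Phi> (\<Psi> z) = z" using inv1 by simp
  have xd: "((\<lambda>z. U (\<Psi> z)) has_derivative (\<lambda>h. Re (F z * h))) (at z)" if z: "z \<in> \<Omega>" for z
  proof -
    have zD: "\<Psi> z \<in> D" using inv1[OF z] by simp
    have dPsi: "(\<Psi> has_field_derivative deriv \<Psi> z) (at z)"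
      using holomorphic_derivI[OF hol(2) \<Omega> z] .
    have hd: "((\<lambda>z. U (\<Psi> z)) has_derivative (\<lambda>h. Re (G (\<Psi> z) * (deriv \<Psi> z * h)))) (at z)"
      using has_derivative_compose[OF dPsi[unfolded has_field_derivative_def] U[OF zD]] .
    have one: "P (\<Psi> z) * deriv \<Psi> z = 1"
      unfolding P_def by (rule inverse_deriv_one[OF \<Omega> z hol(1) D(1) hol(2) zD inv1a])
    have eq: "G (\<Psi> z) * (deriv \<Psi> z * h) = F z * h" for h
    proof -
      have "G (\<Psi> z) * (deriv \<Psi> z * h) = F (\<Phi> (\<Psi> z)) * (P (\<Psi> z) * deriv \<Psi> z) * h"
        unfolding G_def by (simp only: mult.assoc)
      also have "\<dots> = F z * h" by (simp only: one inv1a[OF z] mult_1_right)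
      finally show ?thesis .
    qed
    show ?thesis using hd by (simp only: eq)
  qed
  show ?thesis by (rule exI[of _ "\<lambda>z. U (\<Psi> z)"]) (use xd in blast)
qed

lemma exact_simply_connected:
  fixes F Fu Fv :: "complex \<Rightarrow> complex"
  assumes \<Omega>: "open \<Omega>" "simply_connected \<Omega>"
    and dF: "\<And>z. z \<in> \<Omega> \<Longrightarrow> (F has_derivative (\<lambda>h. of_real (Re h) * Fu z + of_real (Im h) * Fv z)) (at z)"
    and cF: "continuous_on \<Omega> F" "continuous_on \<Omega> Fu" "continuous_on \<Omega> Fv"
    and cl: "\<And>z. z \<in> \<Omega> \<Longrightarrow> Re (Fv z) = - Im (Fu z)"
  shows "\<exists>x. \<forall>z\<in>\<Omega>. (x has_derivative (\<lambda>h. Re (F z * h))) (at z)"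
proof -
  have "\<Omega> = {} \<or> \<Omega> = UNIV \<or>
           (\<exists>f g. f holomorphic_on \<Omega> \<and> g holomorphic_on ball 0 1 \<and>
                 (\<forall>z \<in> \<Omega>. f z \<in> ball 0 1 \<and> g(f z) = z) \<and>
                 (\<forall>z \<in> ball 0 1. g z \<in> \<Omega> \<and> f(g z) = z))"
    using simply_connected_eq_biholomorphic_to_disc[OF \<Omega>(1)] \<Omega>(2) by blast
  moreover
  { assume "\<Omega> = {}" then have ?thesis by simp }
  moreover
  { assume U: "\<Omega> = UNIV"
    have "\<exists>x. \<forall>z\<in>UNIV. (x has_derivative (\<lambda>h. Re (F z * h))) (at z)"
      by (rule exact_transport[of UNIV UNIV "\<lambda>z. z" "\<lambda>z. z" F Fu Fv])
         (use dF cF cl U in \<open>auto intro: holomorphic_on_id\<close>)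
    then have ?thesis using U by simp }
  moreover
  { assume "\<exists>f g. f holomorphic_on \<Omega> \<and> g holomorphic_on ball 0 1 \<and>
                 (\<forall>z \<in> \<Omega>. f z \<in> ball 0 1 \<and> g(f z) = z) \<and>
                 (\<forall>z \<in> ball 0 1. g z \<in> \<Omega> \<and> f(g z) = z)"
    then obtain f g where fg: "f holomorphic_on \<Omega>" "g holomorphic_on ball 0 1"
       "\<And>z. z \<in> \<Omega> \<Longrightarrow> f z \<in> ball 0 1 \<and> g(f z) = z"
       "\<And>z. z \<in> ball 0 1 \<Longrightarrow> g z \<in> \<Omega> \<and> f(g z) = z" by blast
    have ?thesis
      by (rule exact_transport[OF \<Omega>(1) open_ball convex_ball fg(2,1,3,4) dF cF cl]) }
  ultimately show ?thesis by blast
qed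

lemma mvt_line2:
  fixes g :: "complex \<Rightarrow> real"
  assumes h: "h > 0"
    and d1: "\<And>s. s \<in> {0..h} \<Longrightarrow> (g has_derivative D (z1 + of_real s * e)) (at (z1 + of_real s * e))"
    and d2: "\<And>s. s \<in> {0..h} \<Longrightarrow> (g has_derivative D (z2 + of_real s * e)) (at (z2 + of_real s * e))"
  shows "\<exists>\<xi>\<in>{0<..<h}. (g (z1 + of_real h * e) - g (z2 + of_real h * e)) - (g z1 - g z2)
            = h * (D (z1 + of_real \<xi> * e) e - D (z2 + of_real \<xi> * e) e)"
proof -
  define \<phi> where "\<phi> = (\<lambda>s::real. g (z1 + of_real s * e) - g (z2 + of_real s * e))"
  have "(\<phi> has_derivative (\<lambda>\<sigma>. \<sigma> *\<^sub>R D (z1 + of_real s * e) e - \<sigma> *\<^sub>R D (z2 + of_real s * e) e)) (at s within {0..h})"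
    if "0 \<le> s" "s \<le> h" for s
    unfolding \<phi>_def
    by (intro has_derivative_diff line_has_derivative d1 d2) (use that in auto)
  from mvt_simple[OF h this]
  obtain \<xi> where "\<xi> \<in> {0<..<h}" "\<phi> h - \<phi> 0 = (h - 0) *\<^sub>R D (z1 + of_real \<xi> * e) e - (h - 0) *\<^sub>R D (z2 + of_real \<xi> * e) e"
    by blast
  then show ?thesis by (intro bexI[of _ \<xi>]) (auto simp: \<phi>_def algebra_simps)
qed

lemma mvt_line1:
  fixes g :: "complex \<Rightarrow> real"
  assumes h: "h > 0"
    and d1: "\<And>s. s \<in> {0..h} \<Longrightarrow> (g has_derivative D (z1 + of_real s * e)) (at (z1 + of_real s * e))"
  shows "\<exists>\<xi>\<in>{0<..<h}. g (z1 + of_real h * e) - g z1 = h * D (z1 + of_real \<xi> * e) e"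
proof -
  define \<phi> where "\<phi> = (\<lambda>s::real. g (z1 + of_real s * e))"
  have "(\<phi> has_derivative (\<lambda>\<sigma>. \<sigma> *\<^sub>R D (z1 + of_real s * e) e)) (at s within {0..h})"
    if "0 \<le> s" "s \<le> h" for s
    unfolding \<phi>_def
    by (intro line_has_derivative d1) (use that in auto)
  from mvt_simple[OF h this]
  obtain \<xi> where "\<xi> \<in> {0<..<h}" "\<phi> h - \<phi> 0 = (h - 0) *\<^sub>R D (z1 + of_real \<xi> * e) e"
    by blast
  then show ?thesis by (intro bexI[of _ \<xi>]) (auto simp: \<phi>_def)
qed

lemma small_point:
  assumes "r > 0" "0 \<le> s" "s \<le> r/4" "0 \<le> t" "t \<le> r/4"
  shows "z + of_real s + \<i> * of_real t \<in> ball z r"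
proof -
  have "cmod (of_real s + \<i> * of_real t) \<le> cmod (of_real s) + cmod (\<i> * of_real t)"
    by (rule norm_triangle_ineq)
  also have "\<dots> = \<bar>s\<bar> + \<bar>t\<bar>" by (simp add: norm_mult)
  also have "\<dots> < r" using assms by linarith
  finally have "dist (z + (of_real s + \<i> * of_real t)) z < r" by (simp add: dist_norm)
  then show ?thesis by (simp add: dist_commute add.assoc)
qed

lemma schwarz:
  fixes f :: "complex \<Rightarrow> real"
  assumes S: "open S" and C2: "C2_on S f" and z: "z \<in> S"
  shows "pu (pv f) z = pv (pu f) z"
proof -
  define P where "P = pu f"
  define Q where "Q = pv f"
  have C: "C1_on S f" "C1_on S P" "C1_on S Q" using C2 by (auto simp: C2_on_def P_def Q_def)
  have df: "\<And>w. w \<in> S \<Longrightarrow> (f has_derivative (\<lambda>k. Re k *\<^sub>R P w + Im k *\<^sub>R Q w)) (at w)"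
    unfolding P_def Q_def by (rule C1_on_deriv[OF S C(1)])
  have dP: "\<And>w. w \<in> S \<Longrightarrow> (P has_derivative (\<lambda>k. Re k *\<^sub>R pu P w + Im k *\<^sub>R pv P w)) (at w)"
    by (rule C1_on_deriv[OF S C(2)])
  have dQ: "\<And>w. w \<in> S \<Longrightarrow> (Q has_derivative (\<lambda>k. Re k *\<^sub>R pu Q w + Im k *\<^sub>R pv Q w)) (at w)"
    by (rule C1_on_deriv[OF S C(3)])
  have cPv: "continuous_on S (pv P)" and cQu: "continuous_on S (pu Q)"
    using C(2,3) by (auto simp: C1_on_def)
  show ?thesis
  proof (rule ccontr)
    assume ne: "pu (pv f) z \<noteq> pv (pu f) z"
    define \<epsilon> where "\<epsilon> = \<bar>pu Q z - pv P z\<bar> / 4"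
    have \<epsilon>: "\<epsilon> > 0" using ne by (simp add: \<epsilon>_def P_def Q_def)
    obtain r1 where r1: "r1 > 0" "ball z r1 \<subseteq> S" using S z openE by blast
    obtain r2 where r2: "r2 > 0" "\<And>w. w \<in> S \<Longrightarrow> dist w z < r2 \<Longrightarrow> dist (pv P w) (pv P z) < \<epsilon>"
      using cPv z \<epsilon> unfolding continuous_on_iff by blast
    obtain r3 where r3: "r3 > 0" "\<And>w. w \<in> S \<Longrightarrow> dist w z < r3 \<Longrightarrow> dist (pu Q w) (pu Q z) < \<epsilon>"
      using cQu z \<epsilon> unfolding continuous_on_iff by blast
    define r where "r = min r1 (min r2 r3)"
    have r: "r > 0" using r1 r2 r3 by (simp add: r_def)
    define h where "h = r / 4"
    have h: "h > 0" using r by (simp add: h_def)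
    have inball: "z + of_real s + \<i> * of_real t \<in> ball z r" if "0 \<le> s" "s \<le> h" "0 \<le> t" "t \<le> h" for s t
      using small_point[OF r that[unfolded h_def]] .
    have inS: "z + of_real s + \<i> * of_real t \<in> S" if "0 \<le> s" "s \<le> h" "0 \<le> t" "t \<le> h" for s t
      using inball[OF that] r1 by (auto simp: r_def)
    have close2: "dist (pv P (z + of_real s + \<i> * of_real t)) (pv P z) < \<epsilon>"
      and close3: "dist (pu Q (z + of_real s + \<i> * of_real t)) (pu Q z) < \<epsilon>"
      if "0 \<le> s" "s \<le> h" "0 \<le> t" "t \<le> h" for s t
    proof -
      let ?w = "z + of_real s + \<i> * of_real t"
      have "dist z ?w < r" using inball[OF that] by simp
      then have "dist ?w z < r2" "dist ?w z < r3" by (auto simp: r_def dist_commute)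
      then show "dist (pv P ?w) (pv P z) < \<epsilon>" "dist (pu Q ?w) (pu Q z) < \<epsilon>"
        using r2(2) r3(2) inS[OF that] by auto
    qed
    define pt where "pt = (\<lambda>a b::real. z + of_real a + \<i> * of_real b)"
    have ptu: "pt a b + of_real s * 1 = pt (a + s) b" for a b s by (simp add: pt_def algebra_simps)
    have ptv: "pt a b + of_real s * \<i> = pt a (b + s)" for a b s by (simp add: pt_def algebra_simps)
    have pt0: "pt 0 0 = z" by (simp add: pt_def)
    have ptS: "pt s t \<in> S" if "0 \<le> s" "s \<le> h" "0 \<le> t" "t \<le> h" for s t
      unfolding pt_def using inS[OF that] .
    define D where "D = (\<lambda>w k. Re k *\<^sub>R P w + Im k *\<^sub>R Q w)"
    define DP where "DP = (\<lambda>w k. Re k *\<^sub>R pu P w + Im k *\<^sub>R pv P w)"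
    define DQ where "DQ = (\<lambda>w k. Re k *\<^sub>R pu Q w + Im k *\<^sub>R pv Q w)"
    have dfp: "(f has_derivative D (pt s t)) (at (pt s t))" if "0 \<le> s" "s \<le> h" "0 \<le> t" "t \<le> h" for s t
      unfolding D_def by (rule df[OF ptS[OF that]])
    have dPp: "(P has_derivative DP (pt s t)) (at (pt s t))" if "0 \<le> s" "s \<le> h" "0 \<le> t" "t \<le> h" for s t
      unfolding DP_def by (rule dP[OF ptS[OF that]])
    have dQp: "(Q has_derivative DQ (pt s t)) (at (pt s t))" if "0 \<le> s" "s \<le> h" "0 \<le> t" "t \<le> h" for s t
      unfolding DQ_def by (rule dQ[OF ptS[OF that]])
    obtain \<xi> where \<xi>: "\<xi> \<in> {0<..<h}" and e1: "(f (pt 0 h + of_real h * 1) - f (pt 0 0 + of_real h * 1)) - (f (pt 0 h) - f (pt 0 0))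
            = h * (D (pt 0 h + of_real \<xi> * 1) 1 - D (pt 0 0 + of_real \<xi> * 1) 1)"
    proof -
      have a1: "(f has_derivative D (pt 0 h + of_real s * 1)) (at (pt 0 h + of_real s * 1))" if "s \<in> {0..h}" for s
        unfolding ptu using dfp[of s h] that h by simp
      have a2: "(f has_derivative D (pt 0 0 + of_real s * 1)) (at (pt 0 0 + of_real s * 1))" if "s \<in> {0..h}" for s
        unfolding ptu using dfp[of s 0] that h by simp
      show ?thesis using mvt_line2[OF h a1 a2] that by blast
    qed
    have \<xi>h: "0 \<le> \<xi>" "\<xi> \<le> h" using \<xi> by auto
    obtain \<eta> where \<eta>: "\<eta> \<in> {0<..<h}" and e2: "P (pt \<xi> 0 + of_real h * \<i>) - P (pt \<xi> 0) = h * DP (pt \<xi> 0 + of_real \<eta> * \<i>) \<i>"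
    proof -
      have a1: "(P has_derivative DP (pt \<xi> 0 + of_real s * \<i>)) (at (pt \<xi> 0 + of_real s * \<i>))" if "s \<in> {0..h}" for s
        unfolding ptv using dPp[of \<xi> s] that \<xi>h by simp
      show ?thesis using mvt_line1[OF h a1] that by blast
    qed
    have \<eta>h: "0 \<le> \<eta>" "\<eta> \<le> h" using \<eta> by auto
    obtain \<xi>' where \<xi>': "\<xi>' \<in> {0<..<h}" and e3: "(f (pt h 0 + of_real h * \<i>) - f (pt 0 0 + of_real h * \<i>)) - (f (pt h 0) - f (pt 0 0))
            = h * (D (pt h 0 + of_real \<xi>' * \<i>) \<i> - D (pt 0 0 + of_real \<xi>' * \<i>) \<i>)"
    proof -
      have a1: "(f has_derivative D (pt h 0 + of_real s * \<i>)) (at (pt h 0 + of_real s * \<i>))" if "s \<in> {0..h}" for s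
        unfolding ptv using dfp[of h s] that h by simp
      have a2: "(f has_derivative D (pt 0 0 + of_real s * \<i>)) (at (pt 0 0 + of_real s * \<i>))" if "s \<in> {0..h}" for s
        unfolding ptv using dfp[of 0 s] that h by simp
      show ?thesis using mvt_line2[OF h a1 a2] that by blast
    qed
    have \<xi>'h: "0 \<le> \<xi>'" "\<xi>' \<le> h" using \<xi>' by auto
    obtain \<eta>' where \<eta>': "\<eta>' \<in> {0<..<h}" and e4: "Q (pt 0 \<xi>' + of_real h * 1) - Q (pt 0 \<xi>') = h * DQ (pt 0 \<xi>' + of_real \<eta>' * 1) 1"
    proof -
      have a1: "(Q has_derivative DQ (pt 0 \<xi>' + of_real s * 1)) (at (pt 0 \<xi>' + of_real s * 1))" if "s \<in> {0..h}" for s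
        unfolding ptu using dQp[of s \<xi>'] that \<xi>'h by simp
      show ?thesis using mvt_line1[OF h a1] that by blast
    qed
    have \<eta>'h: "0 \<le> \<eta>'" "\<eta>' \<le> h" using \<eta>' by auto
    have E1: "(f (pt h h) - f (pt h 0)) - (f (pt 0 h) - f (pt 0 0)) = h * (h * pv P (pt \<xi> \<eta>))"
    proof -
      have "(f (pt h h) - f (pt h 0)) - (f (pt 0 h) - f (pt 0 0)) = h * (P (pt \<xi> h) - P (pt \<xi> 0))"
        using e1 unfolding ptu D_def by simp
      also have "P (pt \<xi> h) - P (pt \<xi> 0) = h * pv P (pt \<xi> \<eta>)"
        using e2 unfolding ptv DP_def by simp
      finally show ?thesis .
    qed
    have E2: "(f (pt h h) - f (pt h 0)) - (f (pt 0 h) - f (pt 0 0)) = h * (h * pu Q (pt \<eta>' \<xi>'))"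
    proof -
      have "(f (pt h h) - f (pt h 0)) - (f (pt 0 h) - f (pt 0 0)) = h * (Q (pt h \<xi>') - Q (pt 0 \<xi>'))"
        using e3 unfolding ptv D_def by (simp add: algebra_simps)
      also have "Q (pt h \<xi>') - Q (pt 0 \<xi>') = h * pu Q (pt \<eta>' \<xi>')"
        using e4 unfolding ptu DQ_def by simp
      finally show ?thesis .
    qed
    have eqv: "pv P (pt \<xi> \<eta>) = pu Q (pt \<eta>' \<xi>')"
      using E1 E2 h by simp
    have c1: "dist (pv P (pt \<xi> \<eta>)) (pv P z) < \<epsilon>"
      unfolding pt_def by (rule close2[OF \<xi>h \<eta>h])
    have c2: "dist (pu Q (pt \<eta>' \<xi>')) (pu Q z) < \<epsilon>"
      unfolding pt_def by (rule close3[OF \<eta>'h \<xi>'h])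
    have "\<bar>pu Q z - pv P z\<bar> < 2 * \<epsilon>"
      using c1 c2 eqv by (simp add: dist_real_def)
    then show False using \<epsilon> by (simp add: \<epsilon>_def)
  qed
qed

lemma alg_poly2:
  fixes a b A B w W :: complex
  assumes "w \<noteq> 0" "W \<noteq> 0"
  shows "2 * ((a * ((1/2) * (1/w - w)) + b * ((1/2) * (1/w + w))) * (A * ((1/2) * (1/W - W)) + B * ((1/2) * (1/W + W)))
        + (a * ((\<i>/2) * (1/w + w)) + b * ((\<i>/2) * (1/w - w))) * (A * ((-\<i>/2) * (1/W + W)) + B * ((-\<i>/2) * (1/W - W)))
        + a * A - b * B)
      = ((w*W + 1) * a - (w*W - 1) * b) * ((w*W + 1) * A - (w*W - 1) * B) / (w * W)"
  using assms by (simp add: field_simps)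

lemma alg_null:
  fixes a b w :: complex
  assumes "w \<noteq> 0"
  shows "(a * ((1/2) * (1/w - w)) + b * ((1/2) * (1/w + w))) * (a * ((1/2) * (1/w - w)) + b * ((1/2) * (1/w + w)))
        + (a * ((\<i>/2) * (1/w + w)) + b * ((\<i>/2) * (1/w - w))) * (a * ((\<i>/2) * (1/w + w)) + b * ((\<i>/2) * (1/w - w)))
        + a * a - b * b = 0"
  using assms by (simp add: field_simps)

lemma rhs_null:
  assumes "g z \<noteq> 0"
  shows "lor (Xz_rhs g A B z) (Xz_rhs g A B z) = 0"
  using alg_null[OF assms, of "wz (cr A) z" "wz (cr B) z"] by (simp add: Xz_rhs_def Let_def)

lemma alg_G:
  fixes a b w W :: complex
  assumes "w \<noteq> 0"
  shows "(a * ((1/2) * (1/w - w)) + b * ((1/2) * (1/w + w))) * (w + W)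
        + (a * ((\<i>/2) * (1/w + w)) + b * ((\<i>/2) * (1/w - w))) * (- \<i> * (w - W))
        + a * (w * W - 1) - b * (w * W + 1) = 0"
  using assms by (simp add: field_simps)

lemma rhs_G:
  assumes "g z \<noteq> 0"
  shows "lor (Xz_rhs g A B z) (Gvec g z) = 0"
proof -
  define w where "w = g z"
  have w0: "w \<noteq> 0" using assms by (simp add: w_def)
  have e1: "complex_of_real (2 * Re w) = w + cnj w" by (simp add: complex_add_cnj)
  have e2: "complex_of_real (2 * Im w) = - \<i> * (w - cnj w)" by (simp add: complex_diff_cnj)
  have n: "complex_of_real ((cmod w)^2) = w * cnj w" by (rule complex_norm_square)
  have e3: "complex_of_real (-1 + (cmod w)^2) = w * cnj w - 1"
    unfolding of_real_add of_real_minus of_real_1 n by simp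
  have e4: "complex_of_real (1 + (cmod w)^2) = w * cnj w + 1"
    unfolding of_real_add of_real_1 n by simp
  show ?thesis
    unfolding Xz_rhs_def Gvec_def Let_def w_def[symmetric] e1 e2 e3 e4
    using alg_G[OF w0, of "wz (cr A) z" "wz (cr B) z" "cnj w"] by simp
qed

lemma rhs_Lam:
  assumes "g z \<noteq> 0"
  shows "2 * lor (Xz_rhs g A B z) (cnj4 (Xz_rhs g A B z)) =
          of_real ((cmod (g z) + 1 / cmod (g z))^2
                   * (cmod (wz (cr A) z - of_real (kappa g z) * wz (cr B) z))^2)"
proof -
  define a where "a = wz (cr A) z"
  define b where "b = wz (cr B) z"
  define w where "w = g z"
  define m where "m = cmod w"
  have w0: "w \<noteq> 0" "cnj w \<noteq> 0" using assms by (auto simp: w_def)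
  have m0: "m > 0" using w0 by (simp add: m_def)
  have wW: "w * cnj w = of_real (m^2)" unfolding m_def by (rule complex_norm_square[symmetric])
  have L: "2 * lor (Xz_rhs g A B z) (cnj4 (Xz_rhs g A B z)) =
     ((w*cnj w + 1) * a - (w*cnj w - 1) * b) * ((w*cnj w + 1) * cnj a - (w*cnj w - 1) * cnj b) / (w * cnj w)"
    unfolding alg_poly2[OF w0, symmetric]
    by (simp add: Xz_rhs_def Let_def a_def b_def w_def)
  have k: "kappa g z = (m^2 - 1) / (m^2 + 1)" by (simp add: kappa_def m_def w_def)
  have m1: "m^2 + 1 \<noteq> 0" using zero_le_power2[of m] by linarith
  have R: "of_real ((m + 1 / m)^2 * (cmod (a - of_real (kappa g z) * b))^2)
        = of_real ((m^2 + 1)^2 / m^2) * ((a - of_real (kappa g z) * b) * cnj (a - of_real (kappa g z) * b))"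
  proof -
    have "(m + 1 / m)^2 = (m^2 + 1)^2 / m^2" using m0 by (simp add: field_simps power2_eq_square)
    moreover have "complex_of_real ((cmod (a - of_real (kappa g z) * b))^2) = (a - of_real (kappa g z) * b) * cnj (a - of_real (kappa g z) * b)"
      by (rule complex_norm_square)
    ultimately show ?thesis by simp
  qed
  define M where "M = w * cnj w"
  have M0: "M \<noteq> 0" using w0 by (simp add: M_def)
  have M1: "M + 1 \<noteq> 0"
  proof
    assume "M + 1 = 0"
    then have "complex_of_real (m^2 + 1) = 0" using wW by (simp add: M_def)
    then have "m^2 + 1 = 0" by (simp only: of_real_eq_0_iff)
    then show False using m1 by simp
  qed
  have kc: "complex_of_real (kappa g z) = (M - 1) / (M + 1)"
    unfolding k M_def wW by simp
  have fc: "complex_of_real ((m^2 + 1)^2 / m^2) = (M + 1)^2 / M"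
    unfolding M_def wW by simp
  have cj: "cnj (a - of_real (kappa g z) * b) = cnj a - of_real (kappa g z) * cnj b" by simp
  have alg: "((M + 1) * a - (M - 1) * b) * ((M + 1) * A - (M - 1) * B) / M
      = (M + 1)^2 / M * ((a - (M - 1) / (M + 1) * b) * (A - (M - 1) / (M + 1) * B))" for A B
  proof -
    have x: "a - (M - 1) / (M + 1) * b = ((M + 1) * a - (M - 1) * b) / (M + 1)"
      using M1 by (simp add: field_simps)
    have y: "A - (M - 1) / (M + 1) * B = ((M + 1) * A - (M - 1) * B) / (M + 1)"
      using M1 by (simp add: field_simps)
    have z: "(M + 1)^2 / M * (X / (M + 1) * (Y / (M + 1))) = X * Y / M" for X Y
      using M1 M0 by (simp add: power2_eq_square)
    show ?thesis unfolding x y z ..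
  qed
  have "((w*cnj w + 1) * a - (w*cnj w - 1) * b) * ((w*cnj w + 1) * cnj a - (w*cnj w - 1) * cnj b) / (w * cnj w)
      = of_real ((m^2 + 1)^2 / m^2) * ((a - of_real (kappa g z) * b) * cnj (a - of_real (kappa g z) * b))"
    unfolding cj unfolding kc fc M_def[symmetric] by (rule alg)
  then show ?thesis using L R by (simp add: a_def b_def w_def m_def)
qed

lemma kappa_comb_alg:
  fixes w W :: complex
  assumes "w \<noteq> 0" "w * W + 1 \<noteq> 0"
  shows "(w * W - 1) / (w * W + 1) * (1/w - w) + (1/w + w) = 2 * (w + W) / (w * W + 1)"
    and "(w * W - 1) / (w * W + 1) * (\<i> * (1/w + w)) + \<i> * (1/w - w) = 2 * \<i> * (W - w) / (w * W + 1)"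
proof -
  define V where "V = 1 / w"
  have Vw: "w * V = 1" using assms(1) by (simp add: V_def)
  have l1: "(w * W - 1) / (w * W + 1) * (V - w) + (V + w) = ((w * W - 1) * (V - w) + (V + w) * (w * W + 1)) / (w * W + 1)"
    using assms(2) by (simp add: field_simps)
  have n1: "(w * W - 1) * (V - w) + (V + w) * (w * W + 1) = 2 * W * (w * V) + 2 * w"
    by (simp add: algebra_simps)
  show "(w * W - 1) / (w * W + 1) * (1/w - w) + (1/w + w) = 2 * (w + W) / (w * W + 1)"
    unfolding V_def[symmetric] l1 n1 Vw by (simp add: algebra_simps)
  have l2: "(w * W - 1) / (w * W + 1) * (\<i> * (V + w)) + \<i> * (V - w) = ((w * W - 1) * (\<i> * (V + w)) + \<i> * (V - w) * (w * W + 1)) / (w * W + 1)"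
    using assms(2) by (simp add: field_simps)
  have n2: "(w * W - 1) * (\<i> * (V + w)) + \<i> * (V - w) * (w * W + 1) = 2 * \<i> * W * (w * V) - 2 * \<i> * w"
    by (simp add: algebra_simps)
  show "(w * W - 1) / (w * W + 1) * (\<i> * (1/w + w)) + \<i> * (1/w - w) = 2 * \<i> * (W - w) / (w * W + 1)"
    unfolding V_def[symmetric] l2 n2 Vw by (simp add: algebra_simps)
qed

lemma kappa_comb:
  assumes "g z \<noteq> 0"
  shows "Im (of_real (kappa g z) * (1 / g z - g z) + (1 / g z + g z)) = 0"
    and "Im (of_real (kappa g z) * (\<i> * (1 / g z + g z)) + \<i> * (1 / g z - g z)) = 0"
proof -
  define w where "w = g z"
  have w0: "w \<noteq> 0" using assms by (simp add: w_def)
  have n: "complex_of_real ((cmod w)^2) = w * cnj w" by (rule complex_norm_square)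
  have M1: "w * cnj w + 1 = of_real ((cmod w)^2 + 1)" using n by simp
  have M1': "w * cnj w + 1 \<noteq> 0"
  proof
    assume "w * cnj w + 1 = 0"
    then have "(cmod w)^2 + 1 = 0" unfolding M1 by (simp only: of_real_eq_0_iff)
    then show False using zero_le_power2[of "cmod w"] by linarith
  qed
  have kc: "complex_of_real (kappa g z) = (w * cnj w - 1) / (w * cnj w + 1)"
    unfolding kappa_def w_def[symmetric] by (simp add: n[symmetric])
  have e1: "w + cnj w = of_real (2 * Re w)" by (rule complex_add_cnj)
  have e2: "cnj w - w = of_real (- 2 * Im w) * \<i>" using complex_diff_cnj[of w] by (simp add: algebra_simps)
  show "Im (of_real (kappa g z) * (1 / g z - g z) + (1 / g z + g z)) = 0"
    unfolding kc w_def[symmetric] unfolding kappa_comb_alg[OF w0 M1'] unfolding e1 M1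
    by (simp del: of_real_add of_real_power)
  show "Im (of_real (kappa g z) * (\<i> * (1 / g z + g z)) + \<i> * (1 / g z - g z)) = 0"
    unfolding kc w_def[symmetric] unfolding kappa_comb_alg[OF w0 M1'] unfolding e2 M1
    by (simp del: of_real_add of_real_power)
qed

lemma real_C1_facts:
  fixes y :: "complex \<Rightarrow> real"
  assumes S: "open S" and C: "C1_on S y" and z: "z \<in> S"
  shows "(cr y has_derivative (\<lambda>h. of_real (Re h * pu y z + Im h * pv y z))) (at z)"
    and "pu (cr y) z = of_real (pu y z)" "pv (cr y) z = of_real (pv y z)"
    and "wz (cr y) z = (of_real (pu y z) - \<i> * of_real (pv y z)) / 2"
    and "wzb (cr y) z = (of_real (pu y z) + \<i> * of_real (pv y z)) / 2"
proof -
  have d: "(y has_derivative (\<lambda>h. Re h *\<^sub>R pu y z + Im h *\<^sub>R pv y z)) (at z)"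
    by (rule C1_on_deriv[OF S C z])
  show d2: "(cr y has_derivative (\<lambda>h. of_real (Re h * pu y z + Im h * pv y z))) (at z)"
    unfolding cr_def using has_derivative_of_real[OF d] by simp
  show p1: "pu (cr y) z = of_real (pu y z)" using pu_from_deriv(1)[OF d2] by simp
  show p2: "pv (cr y) z = of_real (pv y z)" using pv_from_deriv(1)[OF d2] by simp
  show "wz (cr y) z = (of_real (pu y z) - \<i> * of_real (pv y z)) / 2" by (simp add: wz_def p1 p2)
  show "wzb (cr y) z = (of_real (pu y z) + \<i> * of_real (pv y z)) / 2" by (simp add: wzb_def p1 p2)
qed

lemma cplx_deriv_from_real:
  fixes P Q :: "complex \<Rightarrow> real" and c :: complex
  assumes "(P has_derivative (\<lambda>h. Re h *\<^sub>R P1 + Im h *\<^sub>R P2)) (at z)"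
    and "(Q has_derivative (\<lambda>h. Re h *\<^sub>R Q1 + Im h *\<^sub>R Q2)) (at z)"
  shows "((\<lambda>z. (of_real (P z) + c * of_real (Q z)) / 2) has_derivative
     (\<lambda>h. of_real (Re h) * ((of_real P1 + c * of_real Q1) / 2) + of_real (Im h) * ((of_real P2 + c * of_real Q2) / 2))) (at z)"
proof -
  have "((\<lambda>z. (of_real (P z) + c * of_real (Q z)) / 2) has_derivative
     (\<lambda>h. (of_real (Re h *\<^sub>R P1 + Im h *\<^sub>R P2) + c * of_real (Re h *\<^sub>R Q1 + Im h *\<^sub>R Q2)) / 2)) (at z)"
  proof -
    have a: "((\<lambda>z. complex_of_real (P z)) has_derivative (\<lambda>h. of_real (Re h *\<^sub>R P1 + Im h *\<^sub>R P2))) (at z)"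
      using has_derivative_of_real[OF assms(1)] .
    have b: "((\<lambda>z. complex_of_real (Q z)) has_derivative (\<lambda>h. of_real (Re h *\<^sub>R Q1 + Im h *\<^sub>R Q2))) (at z)"
      using has_derivative_of_real[OF assms(2)] .
    have "((\<lambda>z. complex_of_real (P z) + c * complex_of_real (Q z)) has_derivative
        (\<lambda>h. of_real (Re h *\<^sub>R P1 + Im h *\<^sub>R P2) + c * of_real (Re h *\<^sub>R Q1 + Im h *\<^sub>R Q2))) (at z)"
      using has_derivative_add[OF a has_derivative_mult_right[OF b]] .
    from bounded_linear.has_derivative[OF bounded_linear_divide[of 2] this]
    show ?thesis .
  qed
  then show ?thesis
    by (rule has_derivative_eq_rhs) (auto simp: algebra_simps add_divide_distrib[symmetric] scaleR_conv_of_real)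
qed

lemma C2_facts:
  fixes A :: "complex \<Rightarrow> real"
  assumes S: "open S" and C2: "C2_on S A" and z: "z \<in> S"
  shows "wz (cr A) z = (of_real (pu A z) + (- \<i>) * of_real (pv A z)) / 2"
    and "((\<lambda>z. (of_real (pu A z) + (- \<i>) * of_real (pv A z)) / 2) has_derivative
     (\<lambda>h. of_real (Re h) * ((of_real (pu (pu A) z) + (- \<i>) * of_real (pu (pv A) z)) / 2)
        + of_real (Im h) * ((of_real (pv (pu A) z) + (- \<i>) * of_real (pv (pv A) z)) / 2))) (at z)"
    and "(of_real (pu (pu A) z) + (- \<i>) * of_real (pu (pv A) z)) / 2
         + \<i> * ((of_real (pv (pu A) z) + (- \<i>) * of_real (pv (pv A) z)) / 2)
       = of_real (pu (pu A) z + pv (pv A) z) / 2"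
    and "wz (wzb (cr A)) z = of_real (pu (pu A) z + pv (pv A) z) / 4"
proof -
  have C: "C1_on S A" "C1_on S (pu A)" "C1_on S (pv A)" using C2 by (auto simp: C2_on_def)
  show "wz (cr A) z = (of_real (pu A z) + (- \<i>) * of_real (pv A z)) / 2"
    using real_C1_facts(4)[OF S C(1) z] by simp
  have dP: "\<And>w. w \<in> S \<Longrightarrow> (pu A has_derivative (\<lambda>h. Re h *\<^sub>R pu (pu A) w + Im h *\<^sub>R pv (pu A) w)) (at w)"
    by (rule C1_on_deriv[OF S C(2)])
  have dQ: "\<And>w. w \<in> S \<Longrightarrow> (pv A has_derivative (\<lambda>h. Re h *\<^sub>R pu (pv A) w + Im h *\<^sub>R pv (pv A) w)) (at w)"
    by (rule C1_on_deriv[OF S C(3)])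
  show "((\<lambda>z. (of_real (pu A z) + (- \<i>) * of_real (pv A z)) / 2) has_derivative
     (\<lambda>h. of_real (Re h) * ((of_real (pu (pu A) z) + (- \<i>) * of_real (pu (pv A) z)) / 2)
        + of_real (Im h) * ((of_real (pv (pu A) z) + (- \<i>) * of_real (pv (pv A) z)) / 2))) (at z)"
    by (rule cplx_deriv_from_real[OF dP[OF z] dQ[OF z]])
  have sw: "pu (pv A) z = pv (pu A) z" by (rule schwarz[OF S C2 z])
  show "(of_real (pu (pu A) z) + (- \<i>) * of_real (pu (pv A) z)) / 2
         + \<i> * ((of_real (pv (pu A) z) + (- \<i>) * of_real (pv (pv A) z)) / 2)
       = of_real (pu (pu A) z + pv (pv A) z) / 2"
    unfolding sw by (simp add: field_simps)
  define ab where "ab = (\<lambda>z. (of_real (pu A z) + \<i> * of_real (pv A z)) / (2::complex))"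
  have eqab: "wzb (cr A) w = ab w" if "w \<in> S" for w
    using real_C1_facts(5)[OF S C(1) that] by (simp add: ab_def)
  have dab: "(ab has_derivative
     (\<lambda>h. of_real (Re h) * ((of_real (pu (pu A) z) + \<i> * of_real (pu (pv A) z)) / 2)
        + of_real (Im h) * ((of_real (pv (pu A) z) + \<i> * of_real (pv (pv A) z)) / 2))) (at z)"
    unfolding ab_def by (rule cplx_deriv_from_real[OF dP[OF z] dQ[OF z]])
  have "wz (wzb (cr A)) z = wz ab z"
    unfolding wz_def using pu_cong[OF S z eqab] by simp
  also have "\<dots> = ((of_real (pu (pu A) z) + \<i> * of_real (pu (pv A) z)) / 2
      - \<i> * ((of_real (pv (pu A) z) + \<i> * of_real (pv (pv A) z)) / 2)) / 2"
    unfolding wz_def pu_from_deriv(1)[OF dab] pv_from_deriv(1)[OF dab] by simp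
  also have "\<dots> = of_real (pu (pu A) z + pv (pv A) z) / 4"
    unfolding sw by (simp add: field_simps)
  finally show "wz (wzb (cr A)) z = of_real (pu (pu A) z + pv (pv A) z) / 4" .
qed

lemma potential_props:
  fixes x :: "complex \<Rightarrow> real" and F Fu Fv :: "complex \<Rightarrow> complex"
  assumes S: "open S"
    and dx: "\<And>z. z \<in> S \<Longrightarrow> (x has_derivative (\<lambda>h. Re (F z * h))) (at z)"
    and dF: "\<And>z. z \<in> S \<Longrightarrow> (F has_derivative (\<lambda>h. of_real (Re h) * Fu z + of_real (Im h) * Fv z)) (at z)"
    and cF: "continuous_on S F" "continuous_on S Fu" "continuous_on S Fv"
  shows "C2_on S x" "\<And>z. z \<in> S \<Longrightarrow> wz (cr x) z = F z / 2"
    "\<And>z. z \<in> S \<Longrightarrow> wz (wzb (cr x)) z = cnj (Fu z + \<i> * Fv z) / 4"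
proof -
  have cx1: "continuous_on S (\<lambda>z. Re (F z * 1))" "continuous_on S (\<lambda>z. Re (F z * \<i>))"
    by (intro continuous_intros cF)+
  have C1x: "C1_on S x" and pux: "\<And>z. z \<in> S \<Longrightarrow> pu x z = Re (F z * 1)"
      and pvx: "\<And>z. z \<in> S \<Longrightarrow> pv x z = Re (F z * \<i>)"
    using deriv_C1_on[OF S dx cx1] by auto
  have dRe: "((\<lambda>z. Re (F z * c)) has_derivative (\<lambda>h. Re ((of_real (Re h) * Fu z + of_real (Im h) * Fv z) * c))) (at z)"
    if "z \<in> S" for z c
    using bounded_linear.has_derivative[OF bounded_linear_Re has_derivative_mult_left[OF dF[OF that]]] .
  have cRe: "continuous_on S (\<lambda>z. Re ((of_real (Re e) * Fu z + of_real (Im e) * Fv z) * c))" for e c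
    by (intro continuous_intros cF)
  have C1a: "C1_on S (\<lambda>z. Re (F z * c))" for c
    by (rule deriv_C1_on(1)[OF S dRe cRe cRe])
  have C1pu: "C1_on S (pu x)" by (rule C1_on_cong[OF S _ C1a[of 1]]) (simp add: pux)
  have C1pv: "C1_on S (pv x)" by (rule C1_on_cong[OF S _ C1a[of "\<i>"]]) (simp add: pvx)
  show "C2_on S x" unfolding C2_on_def using C1x C1pu C1pv by blast
  show wzx: "wz (cr x) z = F z / 2" if "z \<in> S" for z
    using real_C1_facts(4)[OF S C1x that] pux[OF that] pvx[OF that]
    by (simp add: complex_eq_iff)
  show "wz (wzb (cr x)) z = cnj (Fu z + \<i> * Fv z) / 4" if z: "z \<in> S" for z
  proof -
    have eq: "wzb (cr x) w = cnj (F w) / 2" if "w \<in> S" for w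
      using real_C1_facts(5)[OF S C1x that] pux[OF that] pvx[OF that]
      by (simp add: complex_eq_iff)
    have d: "((\<lambda>w. cnj (F w) / 2) has_derivative (\<lambda>h. cnj (of_real (Re h) * Fu z + of_real (Im h) * Fv z) / 2)) (at z)"
      using bounded_linear.has_derivative[OF bounded_linear_divide[of 2] bounded_linear.has_derivative[OF bounded_linear_cnj dF[OF z]]] .
    have "wz (wzb (cr x)) z = wz (\<lambda>w. cnj (F w) / 2) z"
      unfolding wz_def using pu_cong[OF S z eq] by simp
    also have "\<dots> = (cnj (Fu z) / 2 - \<i> * (cnj (Fv z) / 2)) / 2"
      unfolding wz_def pu_from_deriv(1)[OF d] pv_from_deriv(1)[OF d] by simp
    also have "\<dots> = cnj (Fu z + \<i> * Fv z) / 4"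
      by (simp add: field_simps)
    finally show ?thesis .
  qed
qed

lemma uniq_potential:
  fixes x y :: "complex \<Rightarrow> real"
  assumes S: "open S" "connected S" and Cy: "C1_on S y" and Cx: "C1_on S x"
    and eq: "\<And>z. z \<in> S \<Longrightarrow> wz (cr y) z = wz (cr x) z"
  shows "\<exists>c. \<forall>z\<in>S. y z = x z + c"
proof (cases "S = {}")
  case True then show ?thesis by simp
next
  case False
  then obtain z0 where z0: "z0 \<in> S" by blast
  have pp: "pu y z = pu x z \<and> pv y z = pv x z" if "z \<in> S" for z
    using eq[OF that] real_C1_facts(4)[OF S(1) Cy that] real_C1_facts(4)[OF S(1) Cx that]
    by (simp add: complex_eq_iff)
  have d0: "((\<lambda>w. y w - x w) has_derivative (\<lambda>h. 0)) (at z)" if "z \<in> S" for z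
  proof -
    have "((\<lambda>w. y w - x w) has_derivative (\<lambda>h. (Re h *\<^sub>R pu y z + Im h *\<^sub>R pv y z) - (Re h *\<^sub>R pu x z + Im h *\<^sub>R pv x z))) (at z)"
      by (rule has_derivative_diff[OF C1_on_deriv[OF S(1) Cy that] C1_on_deriv[OF S(1) Cx that]])
    then show ?thesis using pp[OF that] by simp
  qed
  have "y z - x z = y z0 - x z0" if "z \<in> S" for z
    by (rule has_derivative_zero_unique_connected[OF S d0 that z0])
  then show ?thesis by (intro exI[of _ "y z0 - x z0"]) (auto simp: algebra_simps)
qed

definition a0f :: "(complex \<Rightarrow> real) \<Rightarrow> complex \<Rightarrow> complex" where
  "a0f A z = (of_real (pu A z) + (- \<i>) * of_real (pv A z)) / 2"
definition a0uf :: "(complex \<Rightarrow> real) \<Rightarrow> complex \<Rightarrow> complex" where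
  "a0uf A z = (of_real (pu (pu A) z) + (- \<i>) * of_real (pu (pv A) z)) / 2"
definition a0vf :: "(complex \<Rightarrow> real) \<Rightarrow> complex \<Rightarrow> complex" where
  "a0vf A z = (of_real (pv (pu A) z) + (- \<i>) * of_real (pv (pv A) z)) / 2"
definition LAf :: "(complex \<Rightarrow> real) \<Rightarrow> complex \<Rightarrow> real" where
  "LAf A z = pu (pu A) z + pv (pv A) z"

lemma a0_cont:
  assumes "C2_on S A"
  shows "continuous_on S (a0f A)" "continuous_on S (a0uf A)" "continuous_on S (a0vf A)"
proof -
  have c: "continuous_on S (pu A)" "continuous_on S (pv A)" "continuous_on S (pu (pu A))"
    "continuous_on S (pv (pu A))" "continuous_on S (pu (pv A))" "continuous_on S (pv (pv A))"
    using assms by (auto simp: C2_on_def C1_on_def)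
  show "continuous_on S (a0f A)" unfolding a0f_def[abs_def] by (intro continuous_intros c) auto
  show "continuous_on S (a0uf A)" unfolding a0uf_def[abs_def] by (intro continuous_intros c) auto
  show "continuous_on S (a0vf A)" unfolding a0vf_def[abs_def] by (intro continuous_intros c) auto
qed

lemma F_construct:
  fixes A B :: "complex \<Rightarrow> real" and p q :: "complex \<Rightarrow> complex"
  assumes S: "open S" and CA: "C2_on S A" and CB: "C2_on S B"
    and hp: "p holomorphic_on S" and hq: "q holomorphic_on S"
  shows "\<exists>Fu Fv. (\<forall>z\<in>S. ((\<lambda>z. a0f A z * p z + a0f B z * q z) has_derivative
            (\<lambda>h. of_real (Re h) * Fu z + of_real (Im h) * Fv z)) (at z))
       \<and> continuous_on S (\<lambda>z. a0f A z * p z + a0f B z * q z) \<and> continuous_on S Fu \<and> continuous_on S Fv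
       \<and> (\<forall>z\<in>S. Fu z + \<i> * Fv z = of_real (LAf A z) / 2 * p z + of_real (LAf B z) / 2 * q z)"
proof -
  define p' where "p' = deriv p"
  define q' where "q' = deriv q"
  define Fu where "Fu = (\<lambda>z. a0f A z * p' z + a0uf A z * p z + (a0f B z * q' z + a0uf B z * q z))"
  define Fv where "Fv = (\<lambda>z. a0f A z * (p' z * \<i>) + a0vf A z * p z + (a0f B z * (q' z * \<i>) + a0vf B z * q z))"
  have dA: "(a0f A has_derivative (\<lambda>h. of_real (Re h) * a0uf A z + of_real (Im h) * a0vf A z)) (at z)" if "z \<in> S" for z
    using C2_facts(2)[OF S CA that] unfolding a0f_def[abs_def] a0uf_def a0vf_def .
  have dB: "(a0f B has_derivative (\<lambda>h. of_real (Re h) * a0uf B z + of_real (Im h) * a0vf B z)) (at z)" if "z \<in> S" for z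
    using C2_facts(2)[OF S CB that] unfolding a0f_def[abs_def] a0uf_def a0vf_def .
  have dp: "(p has_derivative (\<lambda>h. p' z * h)) (at z)" if "z \<in> S" for z
    using holomorphic_derivI[OF hp S that] unfolding p'_def has_field_derivative_def .
  have dq: "(q has_derivative (\<lambda>h. q' z * h)) (at z)" if "z \<in> S" for z
    using holomorphic_derivI[OF hq S that] unfolding q'_def has_field_derivative_def .
  have dF: "((\<lambda>z. a0f A z * p z + a0f B z * q z) has_derivative
            (\<lambda>h. of_real (Re h) * Fu z + of_real (Im h) * Fv z)) (at z)" if z: "z \<in> S" for z
  proof -
    let ?D = "\<lambda>h. (a0f A z * (p' z * h) + (of_real (Re h) * a0uf A z + of_real (Im h) * a0vf A z) * p z)
       + (a0f B z * (q' z * h) + (of_real (Re h) * a0uf B z + of_real (Im h) * a0vf B z) * q z)"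
    have d: "((\<lambda>z. a0f A z * p z + a0f B z * q z) has_derivative ?D) (at z)"
      using has_derivative_add[OF has_derivative_mult[OF dA[OF z] dp[OF z]] has_derivative_mult[OF dB[OF z] dq[OF z]]] .
    have "linear ?D" using has_derivative_linear[OF d] .
    from linear_C_expand'[OF this]
    have "?D = (\<lambda>h. of_real (Re h) * ?D 1 + of_real (Im h) * ?D \<i>)" .
    also have "\<dots> = (\<lambda>h. of_real (Re h) * Fu z + of_real (Im h) * Fv z)"
      by (simp add: Fu_def Fv_def)
    finally show ?thesis using d by simp
  qed
  have cp: "continuous_on S p" "continuous_on S q" "continuous_on S p'" "continuous_on S q'"
    using hp hq holomorphic_on_imp_continuous_on holomorphic_deriv[OF hp S] holomorphic_deriv[OF hq S]
    unfolding p'_def q'_def by blast+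
  note cA = a0_cont[OF CA] and cB = a0_cont[OF CB]
  have c1: "continuous_on S (\<lambda>z. a0f A z * p z + a0f B z * q z)"
    by (intro continuous_intros cA cB cp)
  have c2: "continuous_on S Fu" unfolding Fu_def by (intro continuous_intros cA cB cp)
  have c3: "continuous_on S Fv" unfolding Fv_def by (intro continuous_intros cA cB cp)
  have sumeq: "Fu z + \<i> * Fv z = of_real (LAf A z) / 2 * p z + of_real (LAf B z) / 2 * q z" if z: "z \<in> S" for z
  proof -
    have "Fu z + \<i> * Fv z = (a0uf A z + \<i> * a0vf A z) * p z + (a0uf B z + \<i> * a0vf B z) * q z"
      by (simp add: Fu_def Fv_def algebra_simps)
    also have "a0uf A z + \<i> * a0vf A z = of_real (LAf A z) / 2"
      using C2_facts(3)[OF S CA z] unfolding a0uf_def a0vf_def LAf_def .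
    also have "a0uf B z + \<i> * a0vf B z = of_real (LAf B z) / 2"
      using C2_facts(3)[OF S CB z] unfolding a0uf_def a0vf_def LAf_def .
    finally show ?thesis .
  qed
  show ?thesis
    by (rule exI[of _ Fu], rule exI[of _ Fv]) (use dF c1 c2 c3 sumeq in blast)
qed

lemma lor_cnj4: "lor (cnj4 u) (cnj4 v) = cnj (lor u v)"
  by (cases u; cases v) auto

lemma lor_scale4: "lor (scale4 c u) (scale4 c v) = c * c * lor u v"
  by (cases u; cases v) (auto simp: algebra_simps)

lemma Im_complex_of_real_mult: "Im (of_real r * z) = r * Im z" by simp

lemma close_from:
  assumes "Fu + \<i> * Fv = of_real LA / 2 * p + of_real LB / 2 * q" "LA = k * LB" "Im (of_real k * p + q) = 0"
  shows "Re Fv = - Im Fu"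
proof -
  have "Fu + \<i> * Fv = of_real (LB / 2) * (of_real k * p + q)"
    using assms(1,2) by (simp add: algebra_simps)
  then have "Im (Fu + \<i> * Fv) = Im (of_real (LB / 2) * (of_real k * p + q))" by (rule arg_cong)
  also have "\<dots> = LB / 2 * Im (of_real k * p + q)" by (rule Im_complex_of_real_mult)
  also have "\<dots> = 0" using assms(3) by simp
  finally show ?thesis by simp
qed

lemma null_V:
  assumes "w \<noteq> 0"
  shows "lor (a * ((1/2) * (1/w - w)) + b * ((1/2) * (1/w + w)),
              a * ((\<i>/2) * (1/w + w)) + b * ((\<i>/2) * (1/w - w)), a, b)
             (a * ((1/2) * (1/w - w)) + b * ((1/2) * (1/w + w)),
              a * ((\<i>/2) * (1/w + w)) + b * ((\<i>/2) * (1/w - w)), a, b) = 0"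
  using alg_null[OF assms, of a b] by simp

theorem mainTheorem7:
  fixes \<Omega> :: "complex set" and g :: "complex \<Rightarrow> complex" and A B :: "complex \<Rightarrow> real"
  assumes "open \<Omega>" and "connected \<Omega>" and "simply_connected \<Omega>"
    and "g holomorphic_on \<Omega>" and "\<forall>z\<in>\<Omega>. g z \<noteq> 0"
    and "C2_on \<Omega> A" and "C2_on \<Omega> B"
    and "\<forall>z\<in>\<Omega>. wz (wzb (cr A)) z = of_real (kappa g z) * wz (wzb (cr B)) z"
    and "\<forall>z\<in>\<Omega>. wz (cr A) z \<noteq> of_real (kappa g z) * wz (cr B) z"
  shows "\<exists>x1 x2 x3 x4 :: complex \<Rightarrow> real.
      C2_on \<Omega> x1 \<and> C2_on \<Omega> x2 \<and> C2_on \<Omega> x3 \<and> C2_on \<Omega> x4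
    \<and> (\<forall>z\<in>\<Omega>. Xz x1 x2 x3 x4 z = Xz_rhs g A B z)
    \<and> (\<forall>y1 y2 y3 y4 :: complex \<Rightarrow> real.
          C1_on \<Omega> y1 \<and> C1_on \<Omega> y2 \<and> C1_on \<Omega> y3 \<and> C1_on \<Omega> y4
          \<and> (\<forall>z\<in>\<Omega>. Xz y1 y2 y3 y4 z = Xz_rhs g A B z)
          \<longrightarrow> (\<exists>c1 c2 c3 c4. \<forall>z\<in>\<Omega>. y1 z = x1 z + c1 \<and> y2 z = x2 z + c2
                                   \<and> y3 z = x3 z + c3 \<and> y4 z = x4 z + c4))
    \<and> conformal_spacelike_immersion \<Omega> x1 x2 x3 x4
    \<and> marginally_trapped \<Omega> x1 x2 x3 x4
    \<and> (\<exists>c3 c4. \<forall>z\<in>\<Omega>. x3 z = A z + c3 \<and> x4 z = B z + c4)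
    \<and> (\<forall>z\<in>\<Omega>. lor (Xz x1 x2 x3 x4 z) (Gvec g z) = 0)
    \<and> (\<forall>z\<in>\<Omega>. Lam x1 x2 x3 x4 z =
          of_real ((cmod (g z) + 1 / cmod (g z))^2
                   * (cmod (wz (cr A) z - of_real (kappa g z) * wz (cr B) z))^2))"
proof -
  note \<Omega> = assms(1) and conn = assms(2) and sc = assms(3) and hg = assms(4)
  have gnz: "\<And>z. z \<in> \<Omega> \<Longrightarrow> g z \<noteq> 0" using assms(5) by blast
  note CA = assms(6) and CB = assms(7)
  have h8: "\<And>z. z \<in> \<Omega> \<Longrightarrow> wz (wzb (cr A)) z = of_real (kappa g z) * wz (wzb (cr B)) z"
    using assms(8) by blast
  have h9: "\<And>z. z \<in> \<Omega> \<Longrightarrow> wz (cr A) z \<noteq> of_real (kappa g z) * wz (cr B) z"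
    using assms(9) by blast
  define p1 where "p1 = (\<lambda>z. 1 / g z - g z)"
  define q1 where "q1 = (\<lambda>z. 1 / g z + g z)"
  define p2 where "p2 = (\<lambda>z. \<i> * (1 / g z + g z))"
  define q2 where "q2 = (\<lambda>z. \<i> * (1 / g z - g z))"
  have hp1: "p1 holomorphic_on \<Omega>" unfolding p1_def using hg gnz by (intro holomorphic_intros) auto
  have hq1: "q1 holomorphic_on \<Omega>" unfolding q1_def using hg gnz by (intro holomorphic_intros) auto
  have hp2: "p2 holomorphic_on \<Omega>" unfolding p2_def using hg gnz by (intro holomorphic_intros) auto
  have hq2: "q2 holomorphic_on \<Omega>" unfolding q2_def using hg gnz by (intro holomorphic_intros) auto
  define F1 where "F1 = (\<lambda>z. a0f A z * p1 z + a0f B z * q1 z)"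
  define F2 where "F2 = (\<lambda>z. a0f A z * p2 z + a0f B z * q2 z)"
  obtain Fu1 Fv1 where F1d: "\<And>z. z \<in> \<Omega> \<Longrightarrow> (F1 has_derivative (\<lambda>h. of_real (Re h) * Fu1 z + of_real (Im h) * Fv1 z)) (at z)"
    and F1c: "continuous_on \<Omega> F1" "continuous_on \<Omega> Fu1" "continuous_on \<Omega> Fv1"
    and F1s: "\<And>z. z \<in> \<Omega> \<Longrightarrow> Fu1 z + \<i> * Fv1 z = of_real (LAf A z) / 2 * p1 z + of_real (LAf B z) / 2 * q1 z"
    using F_construct[OF \<Omega> CA CB hp1 hq1] unfolding F1_def by blast
  obtain Fu2 Fv2 where F2d: "\<And>z. z \<in> \<Omega> \<Longrightarrow> (F2 has_derivative (\<lambda>h. of_real (Re h) * Fu2 z + of_real (Im h) * Fv2 z)) (at z)"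
    and F2c: "continuous_on \<Omega> F2" "continuous_on \<Omega> Fu2" "continuous_on \<Omega> Fv2"
    and F2s: "\<And>z. z \<in> \<Omega> \<Longrightarrow> Fu2 z + \<i> * Fv2 z = of_real (LAf A z) / 2 * p2 z + of_real (LAf B z) / 2 * q2 z"
    using F_construct[OF \<Omega> CA CB hp2 hq2] unfolding F2_def by blast
  have LAB: "LAf A z = kappa g z * LAf B z" if z: "z \<in> \<Omega>" for z
  proof -
    have "complex_of_real (LAf A z) / 4 = of_real (kappa g z) * (of_real (LAf B z) / 4)"
      using h8[OF z] C2_facts(4)[OF \<Omega> CA z] C2_facts(4)[OF \<Omega> CB z] unfolding LAf_def by simp
    then have "complex_of_real (LAf A z) = of_real (kappa g z * LAf B z)" by simp
    then show ?thesis by (simp only: of_real_eq_iff)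
  qed
  have cl1: "Re (Fv1 z) = - Im (Fu1 z)" if z: "z \<in> \<Omega>" for z
    by (rule close_from[OF F1s[OF z] LAB[OF z]]) (unfold p1_def q1_def, rule kappa_comb(1)[of g z, OF gnz[OF z]])
  have cl2: "Re (Fv2 z) = - Im (Fu2 z)" if z: "z \<in> \<Omega>" for z
    by (rule close_from[OF F2s[OF z] LAB[OF z]]) (unfold p2_def q2_def, rule kappa_comb(2)[of g z, OF gnz[OF z]])
  obtain x1 where x1: "\<And>z. z \<in> \<Omega> \<Longrightarrow> (x1 has_derivative (\<lambda>h. Re (F1 z * h))) (at z)"
    using exact_simply_connected[OF \<Omega> sc F1d F1c cl1] by blast
  obtain x2 where x2: "\<And>z. z \<in> \<Omega> \<Longrightarrow> (x2 has_derivative (\<lambda>h. Re (F2 z * h))) (at z)"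
    using exact_simply_connected[OF \<Omega> sc F2d F2c cl2] by blast
  have P1: "C2_on \<Omega> x1" "\<And>z. z \<in> \<Omega> \<Longrightarrow> wz (cr x1) z = F1 z / 2"
    "\<And>z. z \<in> \<Omega> \<Longrightarrow> wz (wzb (cr x1)) z = cnj (Fu1 z + \<i> * Fv1 z) / 4"
    using potential_props[of \<Omega> x1 F1 Fu1 Fv1] \<Omega> x1 F1d F1c by blast+
  have P2: "C2_on \<Omega> x2" "\<And>z. z \<in> \<Omega> \<Longrightarrow> wz (cr x2) z = F2 z / 2"
    "\<And>z. z \<in> \<Omega> \<Longrightarrow> wz (wzb (cr x2)) z = cnj (Fu2 z + \<i> * Fv2 z) / 4"
    using potential_props[of \<Omega> x2 F2 Fu2 Fv2] \<Omega> x2 F2d F2c by blast+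
  have wzA: "wz (cr A) z = a0f A z" if "z \<in> \<Omega>" for z
    using C2_facts(1)[OF \<Omega> CA that] unfolding a0f_def .
  have wzB: "wz (cr B) z = a0f B z" if "z \<in> \<Omega>" for z
    using C2_facts(1)[OF \<Omega> CB that] unfolding a0f_def .
  have XzEq: "Xz x1 x2 A B z = Xz_rhs g A B z" if z: "z \<in> \<Omega>" for z
  proof -
    have "F1 z / 2 = a0f A z * ((1/2) * (1/g z - g z)) + a0f B z * ((1/2) * (1/g z + g z))"
      using gnz[OF z] by (simp add: F1_def p1_def q1_def field_simps)
    moreover have "F2 z / 2 = a0f A z * ((\<i>/2) * (1/g z + g z)) + a0f B z * ((\<i>/2) * (1/g z - g z))"
      using gnz[OF z] by (simp add: F2_def p2_def q2_def field_simps)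
    ultimately show ?thesis
      unfolding Xz_def Xz_rhs_def Let_def P1(2)[OF z] P2(2)[OF z] wzA[OF z] wzB[OF z] by simp
  qed
  have C1s: "C1_on \<Omega> x1" "C1_on \<Omega> x2" "C1_on \<Omega> A" "C1_on \<Omega> B"
    using P1(1) P2(1) CA CB by (auto simp: C2_on_def)
  have uniq: "\<exists>c1 c2 c3 c4. \<forall>z\<in>\<Omega>. y1 z = x1 z + c1 \<and> y2 z = x2 z + c2 \<and> y3 z = A z + c3 \<and> y4 z = B z + c4"
    if "C1_on \<Omega> y1 \<and> C1_on \<Omega> y2 \<and> C1_on \<Omega> y3 \<and> C1_on \<Omega> y4 \<and> (\<forall>z\<in>\<Omega>. Xz y1 y2 y3 y4 z = Xz_rhs g A B z)"
    for y1 y2 y3 y4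
  proof -
    have Cy: "C1_on \<Omega> y1" "C1_on \<Omega> y2" "C1_on \<Omega> y3" "C1_on \<Omega> y4" using that by auto
    have e: "Xz y1 y2 y3 y4 z = Xz x1 x2 A B z" if "z \<in> \<Omega>" for z
      using \<open>z \<in> \<Omega>\<close> XzEq[OF \<open>z \<in> \<Omega>\<close>] \<open>C1_on \<Omega> y1 \<and> C1_on \<Omega> y2 \<and> C1_on \<Omega> y3 \<and> C1_on \<Omega> y4 \<and> (\<forall>z\<in>\<Omega>. Xz y1 y2 y3 y4 z = Xz_rhs g A B z)\<close> by auto
    have e1: "\<And>z. z \<in> \<Omega> \<Longrightarrow> wz (cr y1) z = wz (cr x1) z" using e by (simp add: Xz_def)
    have e2: "\<And>z. z \<in> \<Omega> \<Longrightarrow> wz (cr y2) z = wz (cr x2) z" using e by (simp add: Xz_def)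
    have e3: "\<And>z. z \<in> \<Omega> \<Longrightarrow> wz (cr y3) z = wz (cr A) z" using e by (simp add: Xz_def)
    have e4: "\<And>z. z \<in> \<Omega> \<Longrightarrow> wz (cr y4) z = wz (cr B) z" using e by (simp add: Xz_def)
    obtain c1 where c1: "\<forall>z\<in>\<Omega>. y1 z = x1 z + c1" using uniq_potential[OF \<Omega> conn Cy(1) C1s(1) e1] by blast
    obtain c2 where c2: "\<forall>z\<in>\<Omega>. y2 z = x2 z + c2" using uniq_potential[OF \<Omega> conn Cy(2) C1s(2) e2] by blast
    obtain c3 where c3: "\<forall>z\<in>\<Omega>. y3 z = A z + c3" using uniq_potential[OF \<Omega> conn Cy(3) C1s(3) e3] by blast
    obtain c4 where c4: "\<forall>z\<in>\<Omega>. y4 z = B z + c4" using uniq_potential[OF \<Omega> conn Cy(4) C1s(4) e4] by blast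
    show ?thesis using c1 c2 c3 c4 by blast
  qed
  have LamEq: "Lam x1 x2 A B z = of_real ((cmod (g z) + 1 / cmod (g z))^2
                   * (cmod (wz (cr A) z - of_real (kappa g z) * wz (cr B) z))^2)" if z: "z \<in> \<Omega>" for z
    unfolding Lam_def XzEq[OF z] by (rule rhs_Lam[where g=g and z=z and A=A and B=B, OF gnz[OF z]])
  have conf: "conformal_spacelike_immersion \<Omega> x1 x2 A B"
    unfolding conformal_spacelike_immersion_def
  proof (intro ballI conjI)
    fix z assume z: "z \<in> \<Omega>"
    show "lor (Xz x1 x2 A B z) (Xz x1 x2 A B z) = 0" unfolding XzEq[OF z] by (rule rhs_null[where g=g and z=z and A=A and B=B, OF gnz[OF z]])
    show "Im (Lam x1 x2 A B z) = 0" unfolding LamEq[OF z] by simp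
    have m: "cmod (g z) > 0" using gnz[OF z] by simp
    then have p1: "cmod (g z) + 1 / cmod (g z) > 0" by (simp add: add_pos_pos)
    have p2: "cmod (wz (cr A) z - of_real (kappa g z) * wz (cr B) z) > 0" using h9[OF z] by simp
    show "Re (Lam x1 x2 A B z) > 0" unfolding LamEq[OF z] Re_complex_of_real
      by (intro mult_pos_pos zero_less_power p1 p2)
  qed
  have mt: "marginally_trapped \<Omega> x1 x2 A B"
    unfolding marginally_trapped_def
  proof (intro ballI)
    fix z assume z: "z \<in> \<Omega>"
    define a where "a = complex_of_real (LAf A z) / 4"
    define b where "b = complex_of_real (LAf B z) / 4"
    define w where "w = g z"
    define V where "V = (a * ((1/2) * (1/w - w)) + b * ((1/2) * (1/w + w)),
              a * ((\<i>/2) * (1/w + w)) + b * ((\<i>/2) * (1/w - w)), a, b)"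
    have V0: "lor V V = 0" unfolding V_def by (rule null_V) (use gnz[OF z] in \<open>simp add: w_def\<close>)
    have X: "Xzzb x1 x2 A B z = cnj4 V"
    proof -
      have c1: "wz (wzb (cr x1)) z = cnj (a * ((1/2) * (1/w - w)) + b * ((1/2) * (1/w + w)))"
      proof -
        have "Fu1 z + \<i> * Fv1 z = 4 * (a * ((1/2) * (1/w - w)) + b * ((1/2) * (1/w + w)))"
          unfolding F1s[OF z] using gnz[OF z] by (simp add: a_def b_def w_def p1_def q1_def field_simps)
        then show ?thesis unfolding P1(3)[OF z] by simp
      qed
      have c2: "wz (wzb (cr x2)) z = cnj (a * ((\<i>/2) * (1/w + w)) + b * ((\<i>/2) * (1/w - w)))"
      proof -
        have "Fu2 z + \<i> * Fv2 z = 4 * (a * ((\<i>/2) * (1/w + w)) + b * ((\<i>/2) * (1/w - w)))"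
          unfolding F2s[OF z] using gnz[OF z] by (simp add: a_def b_def w_def p2_def q2_def field_simps)
        then show ?thesis unfolding P2(3)[OF z] by simp
      qed
      have c3: "wz (wzb (cr A)) z = cnj a" unfolding C2_facts(4)[OF \<Omega> CA z] a_def LAf_def by simp
      have c4: "wz (wzb (cr B)) z = cnj b" unfolding C2_facts(4)[OF \<Omega> CB z] b_def LAf_def by simp
      show ?thesis unfolding Xzzb_def V_def c1 c2 c3 c4 by simp
    qed
    show "lor (Hvec x1 x2 A B z) (Hvec x1 x2 A B z) = 0"
      unfolding Hvec_def lor_scale4 X lor_cnj4 V0 by simp
  qed
  show ?thesis
  proof (intro exI conjI)
    show "C2_on \<Omega> x1" by (rule P1(1))
    show "C2_on \<Omega> x2" by (rule P2(1))
    show "C2_on \<Omega> A" by (rule CA)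
    show "C2_on \<Omega> B" by (rule CB)
    show "\<forall>z\<in>\<Omega>. Xz x1 x2 A B z = Xz_rhs g A B z" using XzEq by blast
    show "\<forall>y1 y2 y3 y4 :: complex \<Rightarrow> real.
          C1_on \<Omega> y1 \<and> C1_on \<Omega> y2 \<and> C1_on \<Omega> y3 \<and> C1_on \<Omega> y4
          \<and> (\<forall>z\<in>\<Omega>. Xz y1 y2 y3 y4 z = Xz_rhs g A B z)
          \<longrightarrow> (\<exists>c1 c2 c3 c4. \<forall>z\<in>\<Omega>. y1 z = x1 z + c1 \<and> y2 z = x2 z + c2
                                   \<and> y3 z = A z + c3 \<and> y4 z = B z + c4)"
      using uniq by blast
    show "conformal_spacelike_immersion \<Omega> x1 x2 A B" by (rule conf)
    show "marginally_trapped \<Omega> x1 x2 A B" by (rule mt)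
    show "\<forall>z\<in>\<Omega>. A z = A z + 0 \<and> B z = B z + 0" by simp
    show "\<forall>z\<in>\<Omega>. lor (Xz x1 x2 A B z) (Gvec g z) = 0"
      using XzEq rhs_G gnz by simp
    show "\<forall>z\<in>\<Omega>. Lam x1 x2 A B z =
          of_real ((cmod (g z) + 1 / cmod (g z))^2
                   * (cmod (wz (cr A) z - of_real (kappa g z) * wz (cr B) z))^2)"
      using LamEq by blast
  qed
qed

end
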